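(* Let $n_1,n_2,n_3$ be integers with $3\le n_1,n_2\le n_3$. If $3\max(n_1,n_2)\le 2n_3\le n_1n_2$, then for $G=K_{n_1+1}\times K_{n_2+1}\times K_{n_3+1}$ the metric dimension $\dim(G)$, the location-domination number $\gamma^L(G)$, and the location-total-domination number $\gamma^L_t(G)$ are all equal to $2(n_3+1)-1$.
   Context: $K_{m_1}\times K_{m_2}\times K_{m_3}$: vertices are triples $(x_1,x_2,x_3)$, $1\le x_i\le m_i$, adjacent iff they differ in every coordinate. A set $W$ of vertices is resolving if for every two distinct vertices $x,y\notin W$ some $w\in W$ has $d(x,w)\ne d(y,w)$; $\dim(G)$ is the minimum size of a resolving set. A dominating set is a vertex set $D$ such that every vertex is in $D$ or adjacent to a vertex of $D$; a total-dominating set is one such that every vertex is adjacent to a vertex of $D$. A locating-dominating (resp. locating-total-dominating) set is a resolving set that is also dominating (resp. total-dominating); $\gamma^L(G)$ (resp. $\gamma^L_t(G)$) is the minimum size of such a set. *)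

theory Defs
  imports Main "HOL-Library.Extended_Nat"
begin

fun walk :: "'a set \<Rightarrow> ('a \<Rightarrow> 'a \<Rightarrow> bool) \<Rightarrow> nat \<Rightarrow> 'a \<Rightarrow> 'a \<Rightarrow> bool" where
  "walk V E 0 x y = (x \<in> V \<and> x = y)"
| "walk V E (Suc k) x y = (\<exists>z. x \<in> V \<and> E x z \<and> walk V E k z y)"

definition gdist :: "'a set \<Rightarrow> ('a \<Rightarrow> 'a \<Rightarrow> bool) \<Rightarrow> 'a \<Rightarrow> 'a \<Rightarrow> enat" where
  "gdist V E x y = (if \<exists>k. walk V E k x y then enat (LEAST k. walk V E k x y) else \<infinity>)"

definition resolving :: "'a set \<Rightarrow> ('a \<Rightarrow> 'a \<Rightarrow> bool) \<Rightarrow> 'a set \<Rightarrow> bool" where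
  "resolving V E W \<longleftrightarrow> W \<subseteq> V \<and>
     (\<forall>x\<in>V - W. \<forall>y\<in>V - W. x \<noteq> y \<longrightarrow> (\<exists>w\<in>W. gdist V E x w \<noteq> gdist V E y w))"

definition dominating :: "'a set \<Rightarrow> ('a \<Rightarrow> 'a \<Rightarrow> bool) \<Rightarrow> 'a set \<Rightarrow> bool" where
  "dominating V E D \<longleftrightarrow> D \<subseteq> V \<and> (\<forall>v\<in>V. v \<in> D \<or> (\<exists>d\<in>D. E v d))"

definition total_dominating :: "'a set \<Rightarrow> ('a \<Rightarrow> 'a \<Rightarrow> bool) \<Rightarrow> 'a set \<Rightarrow> bool" where
  "total_dominating V E D \<longleftrightarrow> D \<subseteq> V \<and> (\<forall>v\<in>V. \<exists>d\<in>D. E v d)"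

definition metric_dim :: "'a set \<Rightarrow> ('a \<Rightarrow> 'a \<Rightarrow> bool) \<Rightarrow> nat" where
  "metric_dim V E = Inf {card W | W. resolving V E W}"

definition loc_dom_number :: "'a set \<Rightarrow> ('a \<Rightarrow> 'a \<Rightarrow> bool) \<Rightarrow> nat" where
  "loc_dom_number V E = Inf {card W | W. resolving V E W \<and> dominating V E W}"

definition loc_tdom_number :: "'a set \<Rightarrow> ('a \<Rightarrow> 'a \<Rightarrow> bool) \<Rightarrow> nat" where
  "loc_tdom_number V E = Inf {card W | W. resolving V E W \<and> total_dominating V E W}"

(* K_{m1} x K_{m2} x K_{m3} (direct product of complete graphs) *)
definition KKK_verts :: "nat \<Rightarrow> nat \<Rightarrow> nat \<Rightarrow> (nat \<times> nat \<times> nat) set" where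
  "KKK_verts m1 m2 m3 = {1..m1} \<times> {1..m2} \<times> {1..m3}"

definition KKK_adj :: "(nat \<times> nat \<times> nat) \<Rightarrow> (nat \<times> nat \<times> nat) \<Rightarrow> bool" where
  "KKK_adj x y \<longleftrightarrow> fst x \<noteq> fst y \<and> fst (snd x) \<noteq> fst (snd y) \<and> snd (snd x) \<noteq> snd (snd y)"

end

theory Submission
  imports Defs
begin

definition agree :: "nat\<times>nat\<times>nat \<Rightarrow> nat\<times>nat\<times>nat \<Rightarrow> bool" where
  "agree x y \<longleftrightarrow> fst x = fst y \<or> fst (snd x) = fst (snd y) \<or> snd (snd x) = snd (snd y)"

lemma adj_agree: "KKK_adj x y \<longleftrightarrow> \<not> agree x y"
  unfolding KKK_adj_def agree_def by auto

lemma ex_other3: "3 \<le> (m::nat) \<Longrightarrow> a \<in> {1..m} \<Longrightarrow> b \<in> {1..m} \<Longrightarrow> \<exists>c\<in>{1..m}. c \<noteq> a \<and> c \<noteq> b"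
proof -
  assume m: "3 \<le> m" and a: "a \<in> {1..m}" and b: "b \<in> {1..m}"
  have "card ({1..m} - {a,b}) \<ge> 1"
  proof -
    have "card {a,b} \<le> 2" by (simp add: card_insert_le_m1)
    moreover have "card ({1..m} - {a,b}) = card {1..m} - card {a,b}"
      using a b by (intro card_Diff_subset) auto
    ultimately show ?thesis using m by simp
  qed
  then have "{1..m} - {a,b} \<noteq> {}" by (metis card.empty not_one_le_zero)
  then show ?thesis by auto
qed

lemma common_nb:
  assumes "3 \<le> m1" "3 \<le> m2" "3 \<le> m3" "x \<in> KKK_verts m1 m2 m3" "y \<in> KKK_verts m1 m2 m3"
  shows "\<exists>z\<in>KKK_verts m1 m2 m3. KKK_adj x z \<and> KKK_adj z y"
proof -
  obtain x1 x2 x3 where x: "x = (x1,x2,x3)" by (cases x) auto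
  obtain y1 y2 y3 where y: "y = (y1,y2,y3)" by (cases y) auto
  from assms(4,5) x y have r: "x1 \<in> {1..m1}" "y1 \<in> {1..m1}" "x2 \<in> {1..m2}" "y2 \<in> {1..m2}"
     "x3 \<in> {1..m3}" "y3 \<in> {1..m3}" by (auto simp: KKK_verts_def)
  obtain z1 where z1: "z1 \<in> {1..m1}" "z1 \<noteq> x1" "z1 \<noteq> y1" using ex_other3[OF assms(1) r(1,2)] by blast
  obtain z2 where z2: "z2 \<in> {1..m2}" "z2 \<noteq> x2" "z2 \<noteq> y2" using ex_other3[OF assms(2) r(3,4)] by blast
  obtain z3 where z3: "z3 \<in> {1..m3}" "z3 \<noteq> x3" "z3 \<noteq> y3" using ex_other3[OF assms(3) r(5,6)] by blast
  show ?thesis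
    by (rule bexI[of _ "(z1,z2,z3)"]) (use x y z1 z2 z3 in \<open>auto simp: KKK_adj_def KKK_verts_def\<close>)
qed

lemma walk0: "walk V E 0 x y \<longleftrightarrow> x \<in> V \<and> x = y" by simp
lemma walk1: "walk V E 1 x y \<longleftrightarrow> x \<in> V \<and> E x y \<and> y \<in> V"
  unfolding One_nat_def walk.simps by blast

lemma gdist_KKK:
  assumes "3 \<le> m1" "3 \<le> m2" "3 \<le> m3" "x \<in> KKK_verts m1 m2 m3" "y \<in> KKK_verts m1 m2 m3"
  shows "gdist (KKK_verts m1 m2 m3) KKK_adj x y =
           (if x = y then 0 else if KKK_adj x y then 1 else 2)"
proof -
  let ?V = "KKK_verts m1 m2 m3"
  have irr: "\<not> KKK_adj x x" by (simp add: KKK_adj_def)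
  show ?thesis
  proof (cases "x = y")
    case True
    have "walk ?V KKK_adj 0 x y" using True assms(4) by simp
    moreover have "(LEAST k. walk ?V KKK_adj k x y) = 0"
      using True assms(4) by (intro Least_equality[where P = "\<lambda>k. walk ?V KKK_adj k x y"]) auto
    ultimately show ?thesis unfolding gdist_def using True by (simp add: zero_enat_def) (rule exI[of _ 0], simp)
  next
    case ne: False
    show ?thesis
    proof (cases "KKK_adj x y")
      case True
      have w1: "walk ?V KKK_adj 1 x y" using walk1[of ?V KKK_adj x y] True assms(4,5) by simp
      have "(LEAST k. walk ?V KKK_adj k x y) = 1"
      proof (rule Least_equality[where P = "\<lambda>k. walk ?V KKK_adj k x y", OF w1])
        fix k assume "walk ?V KKK_adj k x y"
        then show "1 \<le> k" using ne by (cases k) auto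
      qed
      moreover have "\<exists>k. walk ?V KKK_adj k x y" using w1 by blast
      ultimately show ?thesis unfolding gdist_def using ne True by (simp add: one_enat_def)
    next
      case nadj: False
      obtain z where z: "z \<in> ?V" "KKK_adj x z" "KKK_adj z y" using common_nb[OF assms] by auto
      have w2: "walk ?V KKK_adj 2 x y" using z assms(4,5)
        unfolding numeral_2_eq_2 walk.simps by blast
      have "(LEAST k. walk ?V KKK_adj k x y) = 2"
      proof (rule Least_equality[where P = "\<lambda>k. walk ?V KKK_adj k x y", OF w2])
        fix k assume w: "walk ?V KKK_adj k x y"
        show "2 \<le> k"
        proof (rule ccontr)
          assume "\<not> 2 \<le> k"
          then have "k = 0 \<or> k = 1" by auto
          then show False using w ne nadj walk1[of ?V KKK_adj x y] by auto
        qed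
      qed
      moreover have "\<exists>k. walk ?V KKK_adj k x y" using w2 by blast
      ultimately show ?thesis unfolding gdist_def using ne nadj by (simp add: numeral_eq_enat)
    qed
  qed
qed

definition sep :: "(nat\<times>nat\<times>nat) set \<Rightarrow> nat\<times>nat\<times>nat \<Rightarrow> nat\<times>nat\<times>nat \<Rightarrow> bool" where
  "sep W x y \<longleftrightarrow> (\<exists>w\<in>W. agree x w \<noteq> agree y w)"

lemma resolving_KKK:
  assumes "3 \<le> m1" "3 \<le> m2" "3 \<le> m3"
  shows "resolving (KKK_verts m1 m2 m3) KKK_adj W \<longleftrightarrow>
     W \<subseteq> KKK_verts m1 m2 m3 \<and>
     (\<forall>x\<in>KKK_verts m1 m2 m3 - W. \<forall>y\<in>KKK_verts m1 m2 m3 - W. x \<noteq> y \<longrightarrow> sep W x y)"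
proof -
  let ?V = "KKK_verts m1 m2 m3"
  have key: "gdist ?V KKK_adj x w \<noteq> gdist ?V KKK_adj y w \<longleftrightarrow> agree x w \<noteq> agree y w"
    if "x \<in> ?V - W" "y \<in> ?V - W" "w \<in> W" "W \<subseteq> ?V" for x y w
  proof -
    have "x \<noteq> w" "y \<noteq> w" using that by auto
    moreover have "w \<in> ?V" using that by auto
    ultimately show ?thesis using that gdist_KKK[OF assms, of x w] gdist_KKK[OF assms, of y w]
      by (auto simp: adj_agree)
  qed
  show ?thesis unfolding resolving_def sep_def
  proof (intro iffI conjI ballI impI)
    fix x y assume h: "W \<subseteq> ?V \<and> (\<forall>x\<in>?V - W. \<forall>y\<in>?V - W. x \<noteq> y \<longrightarrow> (\<exists>w\<in>W. gdist ?V KKK_adj x w \<noteq> gdist ?V KKK_adj y w))"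
      and xy: "x \<in> ?V - W" "y \<in> ?V - W" "x \<noteq> y"
    then obtain w where "w \<in> W" "gdist ?V KKK_adj x w \<noteq> gdist ?V KKK_adj y w" by blast
    then show "\<exists>w\<in>W. agree x w \<noteq> agree y w" using key[OF xy(1,2)] h by blast
  next
    assume "W \<subseteq> ?V \<and> (\<forall>x\<in>?V - W. \<forall>y\<in>?V - W. x \<noteq> y \<longrightarrow> (\<exists>w\<in>W. gdist ?V KKK_adj x w \<noteq> gdist ?V KKK_adj y w))"
    then show "W \<subseteq> ?V" by blast
  next
    assume "W \<subseteq> ?V \<and> (\<forall>x\<in>?V - W. \<forall>y\<in>?V - W. x \<noteq> y \<longrightarrow> (\<exists>w\<in>W. agree x w \<noteq> agree y w))"
    then show "W \<subseteq> ?V" by blast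
  next
    fix x y assume h: "W \<subseteq> ?V \<and> (\<forall>x\<in>?V - W. \<forall>y\<in>?V - W. x \<noteq> y \<longrightarrow> (\<exists>w\<in>W. agree x w \<noteq> agree y w))"
      and xy: "x \<in> ?V - W" "y \<in> ?V - W" "x \<noteq> y"
    then obtain w where "w \<in> W" "agree x w \<noteq> agree y w" by blast
    then show "\<exists>w\<in>W. gdist ?V KKK_adj x w \<noteq> gdist ?V KKK_adj y w" using key[OF xy(1,2)] h by blast
  qed
qed

lemma dep_pick:
  fixes m1 m2 u1 u2 v1 v2 :: nat
  assumes "3 \<le> m1" "3 \<le> m2" "u1\<in>{1..m1}" "v1 \<in> {1..m1}" "u2 \<in> {1..m2}" "v2 \<in> {1..m2}"
  shows "\<exists>a\<in>{1..m1}. \<exists>b\<in>{1..m2}. (a = u1 \<or> b = u2) \<and> (a = v1 \<or> b = v2) \<and> (a,b) \<noteq> (u1,u2) \<and> (a,b) \<noteq> (v1,v2)"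
proof (cases "u1 = v1")
  case True
  obtain b where "b \<in> {1..m2}" "b \<noteq> u2" "b \<noteq> v2" using ex_other3[OF assms(2,5,6)] by blast
  then show ?thesis using True assms by (intro bexI[of _ u1] bexI[of _ b]) auto
next
  case F: False
  show ?thesis
  proof (cases "u2 = v2")
    case True
    obtain a where "a \<in> {1..m1}" "a \<noteq> u1" "a \<noteq> v1" using ex_other3[OF assms(1,3,4)] by blast
    then show ?thesis using True assms by (intro bexI[of _ a] bexI[of _ u2]) auto
  next
    case False
    then show ?thesis using F assms by (intro bexI[of _ u1] bexI[of _ v2]) auto
  qed
qed

definition layer :: "(nat\<times>nat\<times>nat) set \<Rightarrow> nat \<Rightarrow> (nat\<times>nat\<times>nat) set" where
  "layer W c = {w\<in>W. snd (snd w) = c}"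

lemma L0:
  assumes m: "3 \<le> m1" "3 \<le> m2" "3 \<le> m3"
    and res: "resolving (KKK_verts m1 m2 m3) KKK_adj W"
    and c: "c \<in> {1..m3}" "c' \<in> {1..m3}" "c \<noteq> c'"
    and uv: "u1\<in>{1..m1}" "v1 \<in> {1..m1}" "u2 \<in> {1..m2}" "v2 \<in> {1..m2}"
    and cov: "\<forall>w\<in>W. snd (snd w) \<in> {c,c'} \<longrightarrow> (fst w, fst (snd w)) \<in> {(u1,u2),(v1,v2)}"
  shows False
proof -
  let ?V = "KKK_verts m1 m2 m3"
  obtain a b where ab: "a\<in>{1..m1}" "b\<in>{1..m2}" "a = u1 \<or> b = u2" "a = v1 \<or> b = v2"
     "(a,b) \<noteq> (u1,u2)" "(a,b) \<noteq> (v1,v2)"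
    using dep_pick[OF m(1,2) uv(1,2,3,4)] by blast
  let ?x = "(a,b,c)" and ?y = "(a,b,c')"
  have R: "W \<subseteq> ?V" "\<forall>x\<in>?V - W. \<forall>y\<in>?V - W. x \<noteq> y \<longrightarrow> sep W x y"
    using res resolving_KKK[OF m] by auto
  have xV: "?x \<in> ?V" "?y \<in> ?V" using ab c by (auto simp: KKK_verts_def)
  have xW: "?x \<notin> W" "?y \<notin> W" using cov ab by auto
  have "sep W ?x ?y" using R(2) xV xW c(3) by auto
  then obtain w where w: "w \<in> W" "agree ?x w \<noteq> agree ?y w" unfolding sep_def by blast
  show False
  proof (cases "snd (snd w) \<in> {c,c'}")
    case True
    then have "(fst w, fst (snd w)) \<in> {(u1,u2),(v1,v2)}" using cov w(1) by blast
    then have "a = fst w \<or> b = fst (snd w)" using ab by auto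
    then show False using w(2) by (auto simp: agree_def)
  next
    case False
    then show False using w(2) by (auto simp: agree_def)
  qed
qed

lemma cover_le2:
  assumes "finite A" "card A \<le> 2" "A \<subseteq> G" "g0 \<in> G"
  shows "\<exists>u\<in>G. \<exists>v\<in>G. A \<subseteq> {u,v}"
proof -
  have "card A = 0 \<or> card A = 1 \<or> card A = 2" using assms(2) by auto
  then show ?thesis
  proof (elim disjE)
    assume "card A = 0" then have "A = {}" using assms(1) by simp
    then show ?thesis using assms(4) by blast
  next
    assume "card A = 1" then obtain u where "A = {u}" by (auto simp: card_Suc_eq)
    then show ?thesis using assms(3) by blast
  next
    assume "card A = 2" then obtain u v where "A = {u,v}" by (auto simp: card_Suc_eq numeral_2_eq_2)
    then show ?thesis using assms(3) by blast
  qed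
qed

lemma layer_cover:
  assumes "W \<subseteq> KKK_verts m1 m2 m3" "finite W" "card (layer W c) \<le> 2" "1 \<le> m1" "1 \<le> m2"
  shows "\<exists>u1\<in>{1..m1}. \<exists>u2\<in>{1..m2}. \<exists>v1\<in>{1..m1}. \<exists>v2\<in>{1..m2}.
           \<forall>w\<in>W. snd (snd w) = c \<longrightarrow> (fst w, fst (snd w)) \<in> {(u1,u2),(v1,v2)}"
proof -
  let ?pr = "\<lambda>w::nat\<times>nat\<times>nat. (fst w, fst (snd w))"
  have fin: "finite (layer W c)" using assms(2) by (simp add: layer_def)
  have c: "card (?pr ` layer W c) \<le> 2" using order_trans[OF card_image_le[OF fin, of ?pr] assms(3)] .
  have sb: "?pr ` layer W c \<subseteq> {1..m1} \<times> {1..m2}" using assms(1) by (auto simp: layer_def KKK_verts_def)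
  have g0: "(1,1) \<in> {1..m1} \<times> {1..m2}" using assms(4,5) by auto
  obtain u v where uv: "u \<in> {1..m1} \<times> {1..m2}" "v \<in> {1..m1} \<times> {1..m2}"
      "?pr ` layer W c \<subseteq> {u,v}"
    using cover_le2[OF finite_imageI[OF fin] c sb g0] by blast
  show ?thesis
    apply (rule bexI[of _ "fst u"], rule bexI[of _ "snd u"], rule bexI[of _ "fst v"], rule bexI[of _ "snd v"])
    using uv by (auto simp: layer_def)
qed

lemma sum_lower:
  fixes f :: "nat \<Rightarrow> nat"
  assumes fin: "finite I" and cI: "card I = m" and m2: "2 \<le> m"
    and h1: "\<forall>c\<in>I. \<forall>c'\<in>I. c \<noteq> c' \<longrightarrow> f c \<le> 1 \<longrightarrow> f c' \<le> 1 \<longrightarrow> False"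
    and h2: "\<forall>c\<in>I. \<forall>c'\<in>I. c \<noteq> c' \<longrightarrow> f c = 0 \<longrightarrow> 3 \<le> f c'"
  shows "2 * m - 1 \<le> sum f I"
proof (cases "\<exists>c0\<in>I. f c0 \<le> 1")
  case True
  then obtain c0 where c0: "c0 \<in> I" "f c0 \<le> 1" by blast
  have s: "sum f I = f c0 + sum f (I - {c0})" using fin c0(1) by (simp add: sum.remove)
  have cr: "card (I - {c0}) = m - 1" using cI c0(1) fin by simp
  show ?thesis
  proof (cases "f c0 = 0")
    case True
    have "\<forall>i\<in>I - {c0}. 3 \<le> f i"
    proof
      fix i assume i: "i \<in> I - {c0}"
      then have "i \<in> I" "c0 \<noteq> i" by auto
      then show "3 \<le> f i" using h2 c0(1) True by blast
    qed
    then have "card (I - {c0}) * 3 \<le> sum f (I - {c0})" using sum_bounded_below[of "I - {c0}" 3 f] by simp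
    then have "(m - 1) * 3 \<le> sum f (I - {c0})" using cr by simp
    then show ?thesis using s m2 by linarith
  next
    case False
    have "\<forall>i\<in>I - {c0}. 2 \<le> f i"
    proof
      fix i assume i: "i \<in> I - {c0}"
      show "2 \<le> f i"
      proof (rule ccontr)
        assume "\<not> 2 \<le> f i" then have fi: "f i \<le> 1" by simp
        from i have "i \<in> I" "c0 \<noteq> i" by auto
        then show False using h1 c0 fi by blast
      qed
    qed
    then have "card (I - {c0}) * 2 \<le> sum f (I - {c0})" using sum_bounded_below[of "I - {c0}" 2 f] by simp
    then have "(m - 1) * 2 \<le> sum f (I - {c0})" using cr by simp
    then show ?thesis using s m2 False by linarith
  qed
next
  case False
  then have "\<forall>i\<in>I. 2 \<le> f i" by auto
  then have "card I * 2 \<le> sum f I" using sum_bounded_below[of I 2 f] by simp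
  then show ?thesis using cI by linarith
qed

lemma cover_le1:
  assumes "finite A" "card A \<le> 1" "A \<subseteq> G" "g0 \<in> G"
  shows "\<exists>u\<in>G. A \<subseteq> {u}"
proof -
  have "card A = 0 \<or> card A = 1" using assms(2) by auto
  then show ?thesis
  proof (elim disjE)
    assume "card A = 0" then have "A = {}" using assms(1) by simp
    then show ?thesis using assms(4) by blast
  next
    assume "card A = 1" then obtain u where "A = {u}" by (auto simp: card_Suc_eq)
    then show ?thesis using assms(3) by blast
  qed
qed

lemma layer_cover1:
  assumes "W \<subseteq> KKK_verts m1 m2 m3" "finite W" "card (layer W c) \<le> 1" "1 \<le> m1" "1 \<le> m2"
  shows "\<exists>u1\<in>{1..m1}. \<exists>u2\<in>{1..m2}.
           \<forall>w\<in>W. snd (snd w) = c \<longrightarrow> (fst w, fst (snd w)) = (u1,u2)"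
proof -
  let ?pr = "\<lambda>w::nat\<times>nat\<times>nat. (fst w, fst (snd w))"
  have fin: "finite (layer W c)" using assms(2) by (simp add: layer_def)
  have c: "card (?pr ` layer W c) \<le> 1" using order_trans[OF card_image_le[OF fin, of ?pr] assms(3)] .
  have sb: "?pr ` layer W c \<subseteq> {1..m1} \<times> {1..m2}" using assms(1) by (auto simp: layer_def KKK_verts_def)
  have g0: "(1,1) \<in> {1..m1} \<times> {1..m2}" using assms(4,5) by auto
  obtain u where uv: "u \<in> {1..m1} \<times> {1..m2}" "?pr ` layer W c \<subseteq> {u}"
    using cover_le1[OF finite_imageI[OF fin] c sb g0] by blast
  show ?thesis
    apply (rule bexI[of _ "fst u"], rule bexI[of _ "snd u"])
    using uv by (auto simp: layer_def)
qed

lemma lower_bound: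
  assumes m: "3 \<le> m1" "3 \<le> m2" "3 \<le> m3"
    and res: "resolving (KKK_verts m1 m2 m3) KKK_adj W"
  shows "2 * m3 - 1 \<le> card W"
proof -
  let ?V = "KKK_verts m1 m2 m3"
  have WV: "W \<subseteq> ?V" using res by (simp add: resolving_def)
  have finV: "finite ?V" by (simp add: KKK_verts_def)
  have finW: "finite W" using finite_subset[OF WV finV] .
  have Wun: "W = (\<Union>c\<in>{1..m3}. layer W c)" using WV by (auto simp: layer_def KKK_verts_def)
  have cardW: "card W = (\<Sum>c\<in>{1..m3}. card (layer W c))"
    apply (subst Wun)
    apply (rule card_UN_disjoint)
    using finW by (auto simp: layer_def)
  have m1: "1 \<le> m1" "1 \<le> m2" using m by auto
  have h1: "\<forall>c\<in>{1..m3}. \<forall>c'\<in>{1..m3}. c \<noteq> c' \<longrightarrow> card (layer W c) \<le> 1 \<longrightarrow> card (layer W c') \<le> 1 \<longrightarrow> False"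
  proof (intro ballI impI)
    fix c c' assume c: "c \<in> {1..m3}" "c' \<in> {1..m3}" "c \<noteq> c'"
      and l: "card (layer W c) \<le> 1" "card (layer W c') \<le> 1"
    obtain u1 u2 where u: "u1\<in>{1..m1}" "u2\<in>{1..m2}"
       "\<forall>w\<in>W. snd (snd w) = c \<longrightarrow> (fst w, fst (snd w)) = (u1,u2)"
      using layer_cover1[OF WV finW l(1) m1] by blast
    obtain v1 v2 where v: "v1\<in>{1..m1}" "v2\<in>{1..m2}"
       "\<forall>w\<in>W. snd (snd w) = c' \<longrightarrow> (fst w, fst (snd w)) = (v1,v2)"
      using layer_cover1[OF WV finW l(2) m1] by blast
    have cov: "\<forall>w\<in>W. snd (snd w) \<in> {c,c'} \<longrightarrow> (fst w, fst (snd w)) \<in> {(u1,u2),(v1,v2)}"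
      using u(3) v(3) by blast
    show False using L0[OF m res c u(1) v(1) u(2) v(2) cov] .
  qed
  have h2: "\<forall>c\<in>{1..m3}. \<forall>c'\<in>{1..m3}. c \<noteq> c' \<longrightarrow> card (layer W c) = 0 \<longrightarrow> 3 \<le> card (layer W c')"
  proof (intro ballI impI)
    fix c c' assume c: "c \<in> {1..m3}" "c' \<in> {1..m3}" "c \<noteq> c'"
      and l: "card (layer W c) = 0"
    show "3 \<le> card (layer W c')"
    proof (rule ccontr)
      assume "\<not> 3 \<le> card (layer W c')"
      then have l2: "card (layer W c') \<le> 2" by simp
      obtain u1 u2 v1 v2 where u: "u1\<in>{1..m1}" "u2\<in>{1..m2}" "v1\<in>{1..m1}" "v2\<in>{1..m2}"
         "\<forall>w\<in>W. snd (snd w) = c' \<longrightarrow> (fst w, fst (snd w)) \<in> {(u1,u2),(v1,v2)}"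
        using layer_cover[OF WV finW l2 m1] by blast
      have e: "layer W c = {}" using l finW by (simp add: layer_def)
      have cov: "\<forall>w\<in>W. snd (snd w) \<in> {c,c'} \<longrightarrow> (fst w, fst (snd w)) \<in> {(u1,u2),(v1,v2)}"
      proof (intro ballI impI)
        fix w assume w: "w \<in> W" "snd (snd w) \<in> {c,c'}"
        have "snd (snd w) \<noteq> c"
        proof
          assume "snd (snd w) = c"
          then have "w \<in> layer W c" using w(1) by (simp add: layer_def)
          then show False using e by blast
        qed
        then show "(fst w, fst (snd w)) \<in> {(u1,u2),(v1,v2)}" using u(5) w by blast
      qed
      show False using L0[OF m res c u(1) u(3) u(2) u(4) cov] .
    qed
  qed
  have "2 * m3 - 1 \<le> (\<Sum>c\<in>{1..m3}. card (layer W c))"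
    by (rule sum_lower[OF _ _ _ h1 h2]) (use m in auto)
  then show ?thesis using cardW by simp
qed

definition cfg :: "nat \<Rightarrow> nat \<Rightarrow> nat \<Rightarrow> (nat \<Rightarrow> nat\<times>nat) \<Rightarrow> (nat \<Rightarrow> nat\<times>nat) \<Rightarrow> bool" where
  "cfg p q n \<alpha> \<beta> \<longleftrightarrow>
    (\<forall>k<n. fst (\<alpha> k) < p \<and> snd (\<alpha> k) < q \<and> fst (\<beta> k) < p \<and> snd (\<beta> k) < q) \<and>
    (\<forall>k<n. fst (\<alpha> k) \<noteq> fst (\<beta> k) \<and> snd (\<alpha> k) \<noteq> snd (\<beta> k)) \<and>
    (\<forall>k<n. \<forall>l<n. (\<alpha> k = \<alpha> l \<longrightarrow> k = l) \<and> (\<beta> k = \<beta> l \<longrightarrow> k = l) \<and> \<alpha> k \<noteq> \<beta> l) \<and>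
    (\<forall>k<n. \<forall>l<n. ((fst (\<alpha> k), snd (\<beta> k)) = (fst (\<alpha> l), snd (\<beta> l)) \<longrightarrow> k = l) \<and>
        ((fst (\<beta> k), snd (\<alpha> k)) = (fst (\<beta> l), snd (\<alpha> l)) \<longrightarrow> k = l) \<and>
        (fst (\<alpha> k), snd (\<beta> k)) \<noteq> (fst (\<beta> l), snd (\<alpha> l))) \<and>
    (\<forall>r<p. \<exists>k1 k2 k3. k1 < n \<and> k2 < n \<and> k3 < n \<and> k1 \<noteq> k2 \<and> k1 \<noteq> k3 \<and> k2 \<noteq> k3 \<and>
        (fst (\<alpha> k1) = r \<or> fst (\<beta> k1) = r) \<and> (fst (\<alpha> k2) = r \<or> fst (\<beta> k2) = r) \<and>
        (fst (\<alpha> k3) = r \<or> fst (\<beta> k3) = r)) \<and>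
    (\<forall>j<q. \<exists>k1 k2 k3. k1 < n \<and> k2 < n \<and> k3 < n \<and> k1 \<noteq> k2 \<and> k1 \<noteq> k3 \<and> k2 \<noteq> k3 \<and>
        (snd (\<alpha> k1) = j \<or> snd (\<beta> k1) = j) \<and> (snd (\<alpha> k2) = j \<or> snd (\<beta> k2) = j) \<and>
        (snd (\<alpha> k3) = j \<or> snd (\<beta> k3) = j))"

definition Wc :: "nat \<Rightarrow> nat \<Rightarrow> nat \<Rightarrow> (nat \<Rightarrow> nat\<times>nat) \<Rightarrow> (nat \<Rightarrow> nat\<times>nat) \<Rightarrow> (nat\<times>nat\<times>nat) set" where
  "Wc p q n \<alpha> \<beta> = (\<lambda>k. (fst (\<alpha> k) + 1, snd (\<alpha> k) + 1, k + 1)) ` {..<n}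
     \<union> (\<lambda>k. (fst (\<beta> k) + 1, snd (\<beta> k) + 1, k + 1)) ` {..<n} \<union> {(p+1, q+1, n+1)}"

context
  fixes p q n :: nat and \<alpha> \<beta> :: "nat \<Rightarrow> nat\<times>nat"
  assumes C: "cfg p q n \<alpha> \<beta>"
begin

lemma C_rng: "k < n \<Longrightarrow> fst (\<alpha> k) < p \<and> snd (\<alpha> k) < q \<and> fst (\<beta> k) < p \<and> snd (\<beta> k) < q"
  using C[unfolded cfg_def, THEN conjunct1] by blast
lemma C_ind: "k < n \<Longrightarrow> fst (\<alpha> k) \<noteq> fst (\<beta> k) \<and> snd (\<alpha> k) \<noteq> snd (\<beta> k)"
  using C[unfolded cfg_def, THEN conjunct2, THEN conjunct1] by blast
lemma C_pos: "k < n \<Longrightarrow> l < n \<Longrightarrow> (\<alpha> k = \<alpha> l \<longrightarrow> k = l) \<and> (\<beta> k = \<beta> l \<longrightarrow> k = l) \<and> \<alpha> k \<noteq> \<beta> l"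
  using C[unfolded cfg_def, THEN conjunct2, THEN conjunct2, THEN conjunct1] by blast
lemma C_off: "k < n \<Longrightarrow> l < n \<Longrightarrow> ((fst (\<alpha> k), snd (\<beta> k)) = (fst (\<alpha> l), snd (\<beta> l)) \<longrightarrow> k = l) \<and>
        ((fst (\<beta> k), snd (\<alpha> k)) = (fst (\<beta> l), snd (\<alpha> l)) \<longrightarrow> k = l) \<and>
        (fst (\<alpha> k), snd (\<beta> k)) \<noteq> (fst (\<beta> l), snd (\<alpha> l))"
  using C[unfolded cfg_def, THEN conjunct2, THEN conjunct2, THEN conjunct2, THEN conjunct1] by blast
lemma C_row: "r < p \<Longrightarrow> \<exists>k1 k2 k3. k1 < n \<and> k2 < n \<and> k3 < n \<and> k1 \<noteq> k2 \<and> k1 \<noteq> k3 \<and> k2 \<noteq> k3 \<and>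
        (fst (\<alpha> k1) = r \<or> fst (\<beta> k1) = r) \<and> (fst (\<alpha> k2) = r \<or> fst (\<beta> k2) = r) \<and>
        (fst (\<alpha> k3) = r \<or> fst (\<beta> k3) = r)"
  using C[unfolded cfg_def, THEN conjunct2, THEN conjunct2, THEN conjunct2, THEN conjunct2, THEN conjunct1] by blast
lemma C_col: "j < q \<Longrightarrow> \<exists>k1 k2 k3. k1 < n \<and> k2 < n \<and> k3 < n \<and> k1 \<noteq> k2 \<and> k1 \<noteq> k3 \<and> k2 \<noteq> k3 \<and>
        (snd (\<alpha> k1) = j \<or> snd (\<beta> k1) = j) \<and> (snd (\<alpha> k2) = j \<or> snd (\<beta> k2) = j) \<and>
        (snd (\<alpha> k3) = j \<or> snd (\<beta> k3) = j)"
  using C[unfolded cfg_def, THEN conjunct2, THEN conjunct2, THEN conjunct2, THEN conjunct2, THEN conjunct2] by blast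

abbreviation "W \<equiv> Wc p q n \<alpha> \<beta>"

lemma ptA: "k < n \<Longrightarrow> (fst (\<alpha> k) + 1, snd (\<alpha> k) + 1, k + 1) \<in> W"
  unfolding Wc_def by blast
lemma ptB: "k < n \<Longrightarrow> (fst (\<beta> k) + 1, snd (\<beta> k) + 1, k + 1) \<in> W"
  unfolding Wc_def by blast
lemma ptZ: "(p+1, q+1, n+1) \<in> W"
  unfolding Wc_def by blast

definition cr :: "nat \<Rightarrow> nat \<Rightarrow> nat\<times>nat" where
  "cr r k = (if fst (\<alpha> k) = r then \<alpha> k else \<beta> k)"
definition cc :: "nat \<Rightarrow> nat \<Rightarrow> nat\<times>nat" where
  "cc j k = (if snd (\<alpha> k) = j then \<alpha> k else \<beta> k)"

lemma cr_in: "k < n \<Longrightarrow> (fst (cr r k) + 1, snd (cr r k) + 1, k + 1) \<in> W"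
  unfolding cr_def using ptA[of k] ptB[of k] by (cases "fst (\<alpha> k) = r") simp_all
lemma cc_in: "k < n \<Longrightarrow> (fst (cc j k) + 1, snd (cc j k) + 1, k + 1) \<in> W"
  unfolding cc_def using ptA[of k] ptB[of k] by (cases "snd (\<alpha> k) = j") simp_all
lemma cr_fst: "fst (\<alpha> k) = r \<or> fst (\<beta> k) = r \<Longrightarrow> fst (cr r k) = r"
  unfolding cr_def by auto
lemma cc_snd: "snd (\<alpha> k) = j \<or> snd (\<beta> k) = j \<Longrightarrow> snd (cc j k) = j"
  unfolding cc_def by auto
lemma cr_inj: assumes "k < n" "l < n" "cr r k = cr r l" shows "k = l"
proof -
  have a: "\<alpha> k = \<alpha> l \<longrightarrow> k = l" "\<beta> k = \<beta> l \<longrightarrow> k = l" "\<alpha> k \<noteq> \<beta> l" "\<alpha> l \<noteq> \<beta> k"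
    using C_pos[OF assms(1,2)] C_pos[OF assms(2,1)] by blast+
  show ?thesis using assms(3) a unfolding cr_def
    by (cases "fst (\<alpha> k) = r"; cases "fst (\<alpha> l) = r") simp_all
qed
lemma cc_inj: assumes "k < n" "l < n" "cc j k = cc j l" shows "k = l"
proof -
  have a: "\<alpha> k = \<alpha> l \<longrightarrow> k = l" "\<beta> k = \<beta> l \<longrightarrow> k = l" "\<alpha> k \<noteq> \<beta> l" "\<alpha> l \<noteq> \<beta> k"
    using C_pos[OF assms(1,2)] C_pos[OF assms(2,1)] by blast+
  show ?thesis using assms(3) a unfolding cc_def
    by (cases "snd (\<alpha> k) = j"; cases "snd (\<alpha> l) = j") simp_all
qed

lemma row_snd_inj:
  assumes "k < n" "l < n" "fst (\<alpha> k) = r \<or> fst (\<beta> k) = r" "fst (\<alpha> l) = r \<or> fst (\<beta> l) = r" "k \<noteq> l"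
  shows "snd (cr r k) \<noteq> snd (cr r l)"
proof
  assume "snd (cr r k) = snd (cr r l)"
  moreover have "fst (cr r k) = fst (cr r l)" using cr_fst assms(3,4) by simp
  ultimately have "cr r k = cr r l" by (simp add: prod_eq_iff)
  then show False using cr_inj assms by blast
qed

lemma col_fst_inj:
  assumes "k < n" "l < n" "snd (\<alpha> k) = j \<or> snd (\<beta> k) = j" "snd (\<alpha> l) = j \<or> snd (\<beta> l) = j" "k \<noteq> l"
  shows "fst (cc j k) \<noteq> fst (cc j l)"
proof
  assume "fst (cc j k) = fst (cc j l)"
  moreover have "snd (cc j k) = snd (cc j l)" using cc_snd assms(3,4) by simp
  ultimately have "cc j k = cc j l" by (simp add: prod_eq_iff)
  then show False using cc_inj assms by blast
qed

lemma row_lemma: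
  assumes ag: "\<forall>w\<in>W. agree x w = agree y w" and r: "r < p" and x1: "fst x = r + 1"
  shows "fst y = r + 1"
proof (rule ccontr)
  assume ny: "fst y \<noteq> r + 1"
  obtain k1 k2 k3 where k: "k1 < n" "k2 < n" "k3 < n" "k1 \<noteq> k2" "k1 \<noteq> k3" "k2 \<noteq> k3"
     "fst (\<alpha> k1) = r \<or> fst (\<beta> k1) = r" "fst (\<alpha> k2) = r \<or> fst (\<beta> k2) = r"
     "fst (\<alpha> k3) = r \<or> fst (\<beta> k3) = r" using C_row[OF r] by blast
  have h: "fst (snd y) = snd (cr r ki) + 1 \<or> snd (snd y) = ki + 1"
    if "ki < n" "fst (\<alpha> ki) = r \<or> fst (\<beta> ki) = r" for ki
  proof -
    have m: "(fst (cr r ki) + 1, snd (cr r ki) + 1, ki + 1) \<in> W" using cr_in that(1) .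
    have f: "fst (cr r ki) = r" using cr_fst that(2) .
    have "agree x (fst (cr r ki) + 1, snd (cr r ki) + 1, ki + 1)" using f x1 by (simp add: agree_def)
    then have "agree y (fst (cr r ki) + 1, snd (cr r ki) + 1, ki + 1)" using ag m by blast
    then show ?thesis using f ny by (auto simp: agree_def)
  qed
  have s12: "snd (cr r k1) \<noteq> snd (cr r k2)" using row_snd_inj k by blast
  have s13: "snd (cr r k1) \<noteq> snd (cr r k3)" using row_snd_inj k by blast
  have s23: "snd (cr r k2) \<noteq> snd (cr r k3)" using row_snd_inj k by blast
  show False using h[OF k(1) k(7)] h[OF k(2) k(8)] h[OF k(3) k(9)] s12 s13 s23 k(4,5,6) by auto
qed

lemma col_lemma:
  assumes ag: "\<forall>w\<in>W. agree x w = agree y w" and j: "j < q" and x2: "fst (snd x) = j + 1"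
  shows "fst (snd y) = j + 1"
proof (rule ccontr)
  assume ny: "fst (snd y) \<noteq> j + 1"
  obtain k1 k2 k3 where k: "k1 < n" "k2 < n" "k3 < n" "k1 \<noteq> k2" "k1 \<noteq> k3" "k2 \<noteq> k3"
     "snd (\<alpha> k1) = j \<or> snd (\<beta> k1) = j" "snd (\<alpha> k2) = j \<or> snd (\<beta> k2) = j"
     "snd (\<alpha> k3) = j \<or> snd (\<beta> k3) = j" using C_col[OF j] by blast
  have h: "fst y = fst (cc j ki) + 1 \<or> snd (snd y) = ki + 1"
    if "ki < n" "snd (\<alpha> ki) = j \<or> snd (\<beta> ki) = j" for ki
  proof -
    have m: "(fst (cc j ki) + 1, snd (cc j ki) + 1, ki + 1) \<in> W" using cc_in that(1) .
    have f: "snd (cc j ki) = j" using cc_snd that(2) .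
    have "agree x (fst (cc j ki) + 1, snd (cc j ki) + 1, ki + 1)" using f x2 by (simp add: agree_def)
    then have "agree y (fst (cc j ki) + 1, snd (cc j ki) + 1, ki + 1)" using ag m by blast
    then show ?thesis using f ny by (auto simp: agree_def)
  qed
  have s12: "fst (cc j k1) \<noteq> fst (cc j k2)" using col_fst_inj k by blast
  have s13: "fst (cc j k1) \<noteq> fst (cc j k3)" using col_fst_inj k by blast
  have s23: "fst (cc j k2) \<noteq> fst (cc j k3)" using col_fst_inj k by blast
  show False using h[OF k(1) k(7)] h[OF k(2) k(8)] h[OF k(3) k(9)] s12 s13 s23 k(4,5,6) by auto
qed


lemma W_sub: "W \<subseteq> KKK_verts (p+1) (q+1) (n+1)"
proof
  fix w assume "w \<in> W"
  then consider (a) k where "k < n" "w = (fst (\<alpha> k) + 1, snd (\<alpha> k) + 1, k + 1)"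
    | (b) k where "k < n" "w = (fst (\<beta> k) + 1, snd (\<beta> k) + 1, k + 1)"
    | (z) "w = (p+1, q+1, n+1)" unfolding Wc_def by blast
  then show "w \<in> KKK_verts (p+1) (q+1) (n+1)"
  proof cases
    case a then show ?thesis using C_rng[of k] by (auto simp: KKK_verts_def)
  next
    case b then show ?thesis using C_rng[of k] by (auto simp: KKK_verts_def)
  next
    case z then show ?thesis by (auto simp: KKK_verts_def)
  qed
qed

lemma W_card: "card W = 2 * n + 1"
proof -
  let ?A = "(\<lambda>k. (fst (\<alpha> k) + 1, snd (\<alpha> k) + 1, k + 1)) ` {..<n}"
  let ?B = "(\<lambda>k. (fst (\<beta> k) + 1, snd (\<beta> k) + 1, k + 1)) ` {..<n}"
  have cA: "card ?A = n" by (subst card_image) (auto simp: inj_on_def)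
  have cB: "card ?B = n" by (subst card_image) (auto simp: inj_on_def)
  have dAB: "?A \<inter> ?B = {}"
  proof (rule ccontr)
    assume "?A \<inter> ?B \<noteq> {}"
    then obtain k l where kl: "k < n" "l < n" "(fst (\<alpha> k) + 1, snd (\<alpha> k) + 1, k + 1) = (fst (\<beta> l) + 1, snd (\<beta> l) + 1, l + 1)"
      by blast
    then have "k = l" "fst (\<alpha> k) = fst (\<beta> k)" by auto
    then show False using C_ind[OF kl(1)] by simp
  qed
  have z: "(p+1, q+1, n+1) \<notin> ?A \<union> ?B" by auto
  have "W = (?A \<union> ?B) \<union> {(p+1, q+1, n+1)}" unfolding Wc_def by blast
  then have "card W = card (?A \<union> ?B) + 1" using z by simp
  also have "card (?A \<union> ?B) = n + n" using card_Un_disjoint[of ?A ?B] dAB cA cB by simp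
  finally show ?thesis by simp
qed

lemma zcase:
  assumes ag: "\<forall>w\<in>W. agree x w = agree y w" and y: "y \<in> KKK_verts (p+1) (q+1) (n+1)"
    and e1: "fst x = fst y" and e2: "fst (snd x) = fst (snd y)"
    and x3: "snd (snd x) = n + 1" and y3: "snd (snd y) \<noteq> n + 1"
  shows False
proof -
  have "agree x (p+1, q+1, n+1)" using x3 by (simp add: agree_def)
  then have "agree y (p+1, q+1, n+1)" using ag ptZ by blast
  then have yz: "fst y = p + 1 \<or> fst (snd y) = q + 1" using y3 by (simp add: agree_def)
  obtain l where l: "l < n" "snd (snd y) = l + 1" using y y3
    by (auto simp: KKK_verts_def) (metis Suc_eq_plus1 Suc_le_D less_Suc_eq_le)
  have "agree y (fst (\<alpha> l) + 1, snd (\<alpha> l) + 1, l + 1)" using l by (simp add: agree_def)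
  then have "agree x (fst (\<alpha> l) + 1, snd (\<alpha> l) + 1, l + 1)" using ag ptA[OF l(1)] by blast
  then have ha: "fst x = fst (\<alpha> l) + 1 \<or> fst (snd x) = snd (\<alpha> l) + 1" using x3 l by (auto simp: agree_def)
  have "agree y (fst (\<beta> l) + 1, snd (\<beta> l) + 1, l + 1)" using l by (simp add: agree_def)
  then have "agree x (fst (\<beta> l) + 1, snd (\<beta> l) + 1, l + 1)" using ag ptB[OF l(1)] by blast
  then have hb: "fst x = fst (\<beta> l) + 1 \<or> fst (snd x) = snd (\<beta> l) + 1" using x3 l by (auto simp: agree_def)
  show False using yz ha hb e1 e2 C_rng[OF l(1)] C_ind[OF l(1)] by auto
qed

lemma bothcase:
  assumes ag: "\<forall>w\<in>W. agree x w = agree y w"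
    and e1: "fst x = fst y" and e2: "fst (snd x) = fst (snd y)"
    and k: "k < n" "snd (snd x) = k + 1" and l: "l < n" "snd (snd y) = l + 1" and kl: "k \<noteq> l"
  shows False
proof -
  have "agree x (fst (\<alpha> k) + 1, snd (\<alpha> k) + 1, k + 1)" using k by (simp add: agree_def)
  then have "agree y (fst (\<alpha> k) + 1, snd (\<alpha> k) + 1, k + 1)" using ag ptA[OF k(1)] by blast
  then have h1: "fst x = fst (\<alpha> k) + 1 \<or> fst (snd x) = snd (\<alpha> k) + 1" using l kl e1 e2 by (auto simp: agree_def)
  have "agree x (fst (\<beta> k) + 1, snd (\<beta> k) + 1, k + 1)" using k by (simp add: agree_def)
  then have "agree y (fst (\<beta> k) + 1, snd (\<beta> k) + 1, k + 1)" using ag ptB[OF k(1)] by blast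
  then have h2: "fst x = fst (\<beta> k) + 1 \<or> fst (snd x) = snd (\<beta> k) + 1" using l kl e1 e2 by (auto simp: agree_def)
  have "agree y (fst (\<alpha> l) + 1, snd (\<alpha> l) + 1, l + 1)" using l by (simp add: agree_def)
  then have "agree x (fst (\<alpha> l) + 1, snd (\<alpha> l) + 1, l + 1)" using ag ptA[OF l(1)] by blast
  then have h3: "fst x = fst (\<alpha> l) + 1 \<or> fst (snd x) = snd (\<alpha> l) + 1" using k kl by (auto simp: agree_def)
  have "agree y (fst (\<beta> l) + 1, snd (\<beta> l) + 1, l + 1)" using l by (simp add: agree_def)
  then have "agree x (fst (\<beta> l) + 1, snd (\<beta> l) + 1, l + 1)" using ag ptB[OF l(1)] by blast
  then have h4: "fst x = fst (\<beta> l) + 1 \<or> fst (snd x) = snd (\<beta> l) + 1" using k kl by (auto simp: agree_def)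
  have ik: "fst (\<alpha> k) \<noteq> fst (\<beta> k)" "snd (\<alpha> k) \<noteq> snd (\<beta> k)" using C_ind[OF k(1)] by auto
  have il: "fst (\<alpha> l) \<noteq> fst (\<beta> l)" "snd (\<alpha> l) \<noteq> snd (\<beta> l)" using C_ind[OF l(1)] by auto
  have ok: "(fst x = fst (\<alpha> k) + 1 \<and> fst (snd x) = snd (\<beta> k) + 1) \<or> (fst x = fst (\<beta> k) + 1 \<and> fst (snd x) = snd (\<alpha> k) + 1)"
    using h1 h2 ik by auto
  have ol: "(fst x = fst (\<alpha> l) + 1 \<and> fst (snd x) = snd (\<beta> l) + 1) \<or> (fst x = fst (\<beta> l) + 1 \<and> fst (snd x) = snd (\<alpha> l) + 1)"
    using h3 h4 il by auto
  have o1: "(fst (\<alpha> k), snd (\<beta> k)) \<noteq> (fst (\<alpha> l), snd (\<beta> l))" using C_off[OF k(1) l(1)] kl by blast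
  have o2: "(fst (\<beta> k), snd (\<alpha> k)) \<noteq> (fst (\<beta> l), snd (\<alpha> l))" using C_off[OF k(1) l(1)] kl by blast
  have o3: "(fst (\<alpha> k), snd (\<beta> k)) \<noteq> (fst (\<beta> l), snd (\<alpha> l))" using C_off[OF k(1) l(1)] by blast
  have o4: "(fst (\<alpha> l), snd (\<beta> l)) \<noteq> (fst (\<beta> k), snd (\<alpha> k))" using C_off[OF l(1) k(1)] by blast
  show False using ok ol o1 o2 o3 o4 by auto
qed

lemma sig_inj:
  assumes x: "x \<in> KKK_verts (p+1) (q+1) (n+1)" and y: "y \<in> KKK_verts (p+1) (q+1) (n+1)"
    and ag: "\<forall>w\<in>W. agree x w = agree y w"
  shows "x = y"
proof -
  have ag': "\<forall>w\<in>W. agree y w = agree x w" using ag by simp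
  have e1: "fst x = fst y"
  proof (cases "fst x \<le> p")
    case True
    have "fst y = (fst x - 1) + 1" using row_lemma[OF ag, of "fst x - 1"] True x by (auto simp: KKK_verts_def)
    then show ?thesis using x by (auto simp: KKK_verts_def)
  next
    case F: False
    show ?thesis
    proof (cases "fst y \<le> p")
      case True
      have "fst x = (fst y - 1) + 1" using row_lemma[OF ag', of "fst y - 1"] True y by (auto simp: KKK_verts_def)
      then show ?thesis using y by (auto simp: KKK_verts_def)
    next
      case False then show ?thesis using F x y by (auto simp: KKK_verts_def)
    qed
  qed
  have e2: "fst (snd x) = fst (snd y)"
  proof (cases "fst (snd x) \<le> q")
    case True
    have "fst (snd y) = (fst (snd x) - 1) + 1" using col_lemma[OF ag, of "fst (snd x) - 1"] True x by (auto simp: KKK_verts_def)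
    then show ?thesis using x by (auto simp: KKK_verts_def)
  next
    case F: False
    show ?thesis
    proof (cases "fst (snd y) \<le> q")
      case True
      have "fst (snd x) = (fst (snd y) - 1) + 1" using col_lemma[OF ag', of "fst (snd y) - 1"] True y by (auto simp: KKK_verts_def)
      then show ?thesis using y by (auto simp: KKK_verts_def)
    next
      case False then show ?thesis using F x y by (auto simp: KKK_verts_def)
    qed
  qed
  have e3: "snd (snd x) = snd (snd y)"
  proof (rule ccontr)
    assume ne: "snd (snd x) \<noteq> snd (snd y)"
    show False
    proof (cases "snd (snd x) = n + 1")
      case True then show False using zcase[OF ag y e1 e2 True] ne by simp
    next
      case F: False
      show False
      proof (cases "snd (snd y) = n + 1")
        case True then show False using zcase[OF ag' x e1[symmetric] e2[symmetric] True] ne by simp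
      next
        case False
        obtain k where k: "k < n" "snd (snd x) = k + 1" using x F
          by (auto simp: KKK_verts_def) (metis Suc_eq_plus1 Suc_le_D less_Suc_eq_le)
        obtain l where l: "l < n" "snd (snd y) = l + 1" using y False
          by (auto simp: KKK_verts_def) (metis Suc_eq_plus1 Suc_le_D less_Suc_eq_le)
        show False using bothcase[OF ag e1 e2 k l] ne k l by auto
      qed
    qed
  qed
  show ?thesis using e1 e2 e3 by (simp add: prod_eq_iff)
qed

lemma tdom:
  assumes p2: "2 \<le> p"
  shows "total_dominating (KKK_verts (p+1) (q+1) (n+1)) KKK_adj W"
  unfolding total_dominating_def
proof (intro conjI ballI)
  show "W \<subseteq> KKK_verts (p+1) (q+1) (n+1)" using W_sub .
next
  fix v assume v: "v \<in> KKK_verts (p+1) (q+1) (n+1)"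
  define r where "r = (if fst v = 1 then 1 else (0::nat))"
  have r: "r < p" "r + 1 \<noteq> fst v" using p2 by (auto simp: r_def)
  obtain k1 k2 k3 where k: "k1 < n" "k2 < n" "k3 < n" "k1 \<noteq> k2" "k1 \<noteq> k3" "k2 \<noteq> k3"
     "fst (\<alpha> k1) = r \<or> fst (\<beta> k1) = r" "fst (\<alpha> k2) = r \<or> fst (\<beta> k2) = r"
     "fst (\<alpha> k3) = r \<or> fst (\<beta> k3) = r" using C_row[OF r(1)] by blast
  have s12: "snd (cr r k1) \<noteq> snd (cr r k2)" using row_snd_inj k by blast
  have s13: "snd (cr r k1) \<noteq> snd (cr r k3)" using row_snd_inj k by blast
  have s23: "snd (cr r k2) \<noteq> snd (cr r k3)" using row_snd_inj k by blast
  have g: "KKK_adj v (fst (cr r ki) + 1, snd (cr r ki) + 1, ki + 1)"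
    if "fst (\<alpha> ki) = r \<or> fst (\<beta> ki) = r" "snd (cr r ki) + 1 \<noteq> fst (snd v)" "ki + 1 \<noteq> snd (snd v)" for ki
    using cr_fst[OF that(1)] that(2,3) r(2) by (auto simp: KKK_adj_def)
  have "\<exists>i\<in>{k1,k2,k3}. snd (cr r i) + 1 \<noteq> fst (snd v) \<and> i + 1 \<noteq> snd (snd v)"
    using s12 s13 s23 k(4,5,6) by auto
  then obtain i where i: "i \<in> {k1,k2,k3}" "snd (cr r i) + 1 \<noteq> fst (snd v)" "i + 1 \<noteq> snd (snd v)" by blast
  have ii: "i < n" "fst (\<alpha> i) = r \<or> fst (\<beta> i) = r" using i(1) k by auto
  show "\<exists>d\<in>W. KKK_adj v d"
    using g[OF ii(2) i(2,3)] cr_in[OF ii(1)] by blast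
qed

end

type_synonym cell = "nat \<times> nat"
type_synonym pr = "cell \<times> cell"

definition validP :: "nat \<Rightarrow> nat \<Rightarrow> pr set \<Rightarrow> bool" where
  "validP p q P \<longleftrightarrow>
    (\<forall>a b. (a,b) \<in> P \<longrightarrow> fst a < p \<and> snd a < q \<and> fst b < p \<and> snd b < q \<and> fst a \<noteq> fst b \<and> snd a \<noteq> snd b) \<and>
    (\<forall>a b a' b'. (a,b) \<in> P \<longrightarrow> (a',b') \<in> P \<longrightarrow>
        (a = a' \<longrightarrow> (a,b) = (a',b')) \<and> (b = b' \<longrightarrow> (a,b) = (a',b')) \<and> a \<noteq> b' \<and>
        ((fst a, snd b) = (fst a', snd b') \<longrightarrow> (a,b) = (a',b')) \<and>
        ((fst b, snd a) = (fst b', snd a') \<longrightarrow> (a,b) = (a',b')) \<and>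
        (fst a, snd b) \<noteq> (fst b', snd a'))"

definition touchR :: "nat \<Rightarrow> pr \<Rightarrow> bool" where
  "touchR r e \<longleftrightarrow> fst (fst e) = r \<or> fst (snd e) = r"
definition touchC :: "nat \<Rightarrow> pr \<Rightarrow> bool" where
  "touchC j e \<longleftrightarrow> snd (fst e) = j \<or> snd (snd e) = j"

definition degP :: "nat \<Rightarrow> nat \<Rightarrow> pr set \<Rightarrow> bool" where
  "degP p q P \<longleftrightarrow>
    (\<forall>r<p. \<exists>e1 e2 e3. e1 \<in> P \<and> e2 \<in> P \<and> e3 \<in> P \<and> e1 \<noteq> e2 \<and> e1 \<noteq> e3 \<and> e2 \<noteq> e3 \<and>
        touchR r e1 \<and> touchR r e2 \<and> touchR r e3) \<and>
    (\<forall>j<q. \<exists>e1 e2 e3. e1 \<in> P \<and> e2 \<in> P \<and> e3 \<in> P \<and> e1 \<noteq> e2 \<and> e1 \<noteq> e3 \<and> e2 \<noteq> e3 \<and>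
        touchC j e1 \<and> touchC j e2 \<and> touchC j e3)"

lemma validP_mono: "validP p q P \<Longrightarrow> P' \<subseteq> P \<Longrightarrow> validP p q P'"
  unfolding validP_def by blast

lemma degP_mono: "degP p q P \<Longrightarrow> P \<subseteq> P' \<Longrightarrow> degP p q P'"
  unfolding degP_def by blast

lemma extend_set:
  assumes "finite M" "C \<subseteq> M" "card C \<le> n" "n \<le> card M"
  shows "\<exists>P. C \<subseteq> P \<and> P \<subseteq> M \<and> card P = n"
proof -
  have fC: "finite C" using assms(1,2) by (rule finite_subset[rotated])
  have cd: "card (M - C) = card M - card C" using card_Diff_subset[OF fC assms(2)] .
  have le: "n - card C \<le> card (M - C)" using assms(4) cd by linarith
  obtain E where E: "E \<subseteq> M - C" "card E = n - card C" "finite E"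
    using obtain_subset_with_card_n[OF le] by metis
  have dj: "C \<inter> E = {}" using E(1) by blast
  have "card (C \<union> E) = card C + card E" using card_Un_disjoint[OF fC E(3) dj] .
  then have "card (C \<union> E) = n" using E(2) assms(3) by linarith
  moreover have "C \<subseteq> C \<union> E" by blast
  moreover have "C \<union> E \<subseteq> M" using E(1) assms(2) by blast
  ultimately show ?thesis by blast
qed

definition trp :: "pr \<Rightarrow> pr" where
  "trp e = ((snd (fst e), fst (fst e)), (snd (snd e), fst (snd e)))"

lemma trp_inj: "inj trp"
  unfolding inj_def trp_def by (auto simp: prod_eq_iff)

lemma trp_pre: "(a,b) \<in> trp ` P \<Longrightarrow> \<exists>a0 b0. (a0,b0) \<in> P \<and> a = (snd a0, fst a0) \<and> b = (snd b0, fst b0)"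
  unfolding trp_def by force

lemma validP_trp:
  assumes v: "validP p q P" shows "validP q p (trp ` P)"
proof -
  have V1: "\<And>a b. (a,b) \<in> P \<Longrightarrow> fst a < p \<and> snd a < q \<and> fst b < p \<and> snd b < q \<and> fst a \<noteq> fst b \<and> snd a \<noteq> snd b"
    using v unfolding validP_def by blast
  have V2: "\<And>a b a' b'. (a,b) \<in> P \<Longrightarrow> (a',b') \<in> P \<Longrightarrow>
        (a = a' \<longrightarrow> (a,b) = (a',b')) \<and> (b = b' \<longrightarrow> (a,b) = (a',b')) \<and> a \<noteq> b' \<and>
        ((fst a, snd b) = (fst a', snd b') \<longrightarrow> (a,b) = (a',b')) \<and>
        ((fst b, snd a) = (fst b', snd a') \<longrightarrow> (a,b) = (a',b')) \<and>
        (fst a, snd b) \<noteq> (fst b', snd a')"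
    using v unfolding validP_def by blast
  show ?thesis unfolding validP_def
  proof (intro conjI allI impI)
    fix a b assume "(a,b) \<in> trp ` P"
    then obtain a0 b0 where e: "(a0,b0) \<in> P" "a = (snd a0, fst a0)" "b = (snd b0, fst b0)"
      using trp_pre by blast
    note h = V1[OF e(1)]
    show "fst a < q" "snd a < p" "fst b < q" "snd b < p" "fst a \<noteq> fst b" "snd a \<noteq> snd b"
      using h e(2,3) by auto
  next
    fix a b a' b' assume ab: "(a,b) \<in> trp ` P" and ab': "(a',b') \<in> trp ` P"
    obtain a0 b0 where e: "(a0,b0) \<in> P" "a = (snd a0, fst a0)" "b = (snd b0, fst b0)"
      using trp_pre[OF ab] by blast
    obtain a1 b1 where e': "(a1,b1) \<in> P" "a' = (snd a1, fst a1)" "b' = (snd b1, fst b1)"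
      using trp_pre[OF ab'] by blast
    note hh = V2[OF e(1) e'(1)]
    have h1: "a0 = a1 \<Longrightarrow> a0 = a1 \<and> b0 = b1" using hh by blast
    have h2: "b0 = b1 \<Longrightarrow> a0 = a1 \<and> b0 = b1" using hh by blast
    have h3: "a0 \<noteq> b1" using hh by blast
    have h4: "(fst a0, snd b0) = (fst a1, snd b1) \<Longrightarrow> a0 = a1 \<and> b0 = b1" using hh by blast
    have h5: "(fst b0, snd a0) = (fst b1, snd a1) \<Longrightarrow> a0 = a1 \<and> b0 = b1" using hh by blast
    have h6: "(fst a1, snd b1) \<noteq> (fst b0, snd a0)" using V2[OF e'(1) e(1)] by blast
    obtain x0 y0 where a0: "a0 = (x0,y0)" by (cases a0)
    obtain x1 y1 where a1: "a1 = (x1,y1)" by (cases a1)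
    obtain u0 v0 where b0: "b0 = (u0,v0)" by (cases b0)
    obtain u1 v1 where b1: "b1 = (u1,v1)" by (cases b1)
    note E = e(2,3) e'(2,3) a0 a1 b0 b1
    show "a = a' \<Longrightarrow> (a, b) = (a', b')" using h1 E by auto
    show "b = b' \<Longrightarrow> (a, b) = (a', b')" using h2 E by auto
    show "a \<noteq> b'" using h3 E by auto
    show "(fst a, snd b) = (fst a', snd b') \<Longrightarrow> (a, b) = (a', b')" using h5 E by auto
    show "(fst b, snd a) = (fst b', snd a') \<Longrightarrow> (a, b) = (a', b')" using h4 E by auto
    show "(fst a, snd b) \<noteq> (fst b', snd a')" using h6 E by auto
  qed
qed

lemma degP_trp: "degP p q P \<Longrightarrow> degP q p (trp ` P)"
proof -
  assume d: "degP p q P"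
  have i: "\<And>x y. trp x = trp y \<Longrightarrow> x = y" by (rule injD[OF trp_inj])
  have tr: "touchR r (trp e) = touchC r e" "touchC r (trp e) = touchR r e" for r e
    unfolding touchR_def touchC_def trp_def by auto
  show ?thesis unfolding degP_def
  proof (intro conjI allI impI)
    fix r assume "r < q"
    then obtain e1 e2 e3 where "e1 \<in> P" "e2 \<in> P" "e3 \<in> P" "e1 \<noteq> e2" "e1 \<noteq> e3" "e2 \<noteq> e3"
        "touchC r e1" "touchC r e2" "touchC r e3" using d unfolding degP_def by blast
    then show "\<exists>e1 e2 e3. e1 \<in> trp ` P \<and> e2 \<in> trp ` P \<and> e3 \<in> trp ` P \<and> e1 \<noteq> e2 \<and> e1 \<noteq> e3 \<and> e2 \<noteq> e3 \<and>
        touchR r e1 \<and> touchR r e2 \<and> touchR r e3"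
      by (intro exI[of _ "trp e1"] exI[of _ "trp e2"] exI[of _ "trp e3"]) (auto simp: tr dest: i)
  next
    fix j assume "j < p"
    then obtain e1 e2 e3 where "e1 \<in> P" "e2 \<in> P" "e3 \<in> P" "e1 \<noteq> e2" "e1 \<noteq> e3" "e2 \<noteq> e3"
        "touchR j e1" "touchR j e2" "touchR j e3" using d unfolding degP_def by blast
    then show "\<exists>e1 e2 e3. e1 \<in> trp ` P \<and> e2 \<in> trp ` P \<and> e3 \<in> trp ` P \<and> e1 \<noteq> e2 \<and> e1 \<noteq> e3 \<and> e2 \<noteq> e3 \<and>
        touchC j e1 \<and> touchC j e2 \<and> touchC j e3"
      by (intro exI[of _ "trp e1"] exI[of _ "trp e2"] exI[of _ "trp e3"]) (auto simp: tr dest: i)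
  qed
qed

lemma P_to_cfg:
  assumes v: "validP p q P" and d: "degP p q P" and f: "finite P" and c: "card P = n"
  shows "\<exists>\<alpha> \<beta>. cfg p q n \<alpha> \<beta>"
proof -
  obtain g where g: "bij_betw g {0..<n} P" using ex_bij_betw_nat_finite[OF f] c by blast
  have gin: "k < n \<Longrightarrow> g k \<in> P" for k using g by (auto simp: bij_betw_def)
  have ginj: "k < n \<Longrightarrow> l < n \<Longrightarrow> g k = g l \<Longrightarrow> k = l" for k l
    using g by (auto simp: bij_betw_def inj_on_def)
  have gsurj: "e \<in> P \<Longrightarrow> \<exists>k<n. g k = e" for e
    using g by (auto simp: bij_betw_def)
  define \<alpha> where "\<alpha> k = fst (g k)" for k
  define \<beta> where "\<beta> k = snd (g k)" for k
  have gab: "g k = (\<alpha> k, \<beta> k)" for k by (simp add: \<alpha>_def \<beta>_def)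
  have V1: "\<And>a b. (a,b) \<in> P \<Longrightarrow> fst a < p \<and> snd a < q \<and> fst b < p \<and> snd b < q \<and> fst a \<noteq> fst b \<and> snd a \<noteq> snd b"
    using v unfolding validP_def by blast
  have V2: "\<And>a b a' b'. (a,b) \<in> P \<Longrightarrow> (a',b') \<in> P \<Longrightarrow>
        (a = a' \<longrightarrow> (a,b) = (a',b')) \<and> (b = b' \<longrightarrow> (a,b) = (a',b')) \<and> a \<noteq> b' \<and>
        ((fst a, snd b) = (fst a', snd b') \<longrightarrow> (a,b) = (a',b')) \<and>
        ((fst b, snd a) = (fst b', snd a') \<longrightarrow> (a,b) = (a',b')) \<and>
        (fst a, snd b) \<noteq> (fst b', snd a')"
    using v unfolding validP_def by blast
  have inP: "k < n \<Longrightarrow> (\<alpha> k, \<beta> k) \<in> P" for k using gin gab by metis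
  have eqk: "k < n \<Longrightarrow> l < n \<Longrightarrow> (\<alpha> k, \<beta> k) = (\<alpha> l, \<beta> l) \<Longrightarrow> k = l" for k l
    using ginj gab by metis
  have deg_tr: "\<exists>k1 k2 k3. k1 < n \<and> k2 < n \<and> k3 < n \<and> k1 \<noteq> k2 \<and> k1 \<noteq> k3 \<and> k2 \<noteq> k3 \<and>
          T (\<alpha> k1, \<beta> k1) \<and> T (\<alpha> k2, \<beta> k2) \<and> T (\<alpha> k3, \<beta> k3)"
    if ex: "\<exists>e1 e2 e3. e1 \<in> P \<and> e2 \<in> P \<and> e3 \<in> P \<and> e1 \<noteq> e2 \<and> e1 \<noteq> e3 \<and> e2 \<noteq> e3 \<and> T e1 \<and> T e2 \<and> T e3" for T
  proof -
    obtain e1 e2 e3 where e: "e1 \<in> P" "e2 \<in> P" "e3 \<in> P" "e1 \<noteq> e2" "e1 \<noteq> e3" "e2 \<noteq> e3" "T e1" "T e2" "T e3"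
      using ex by blast
    obtain k1 where k1: "k1 < n" "g k1 = e1" using gsurj e(1) by blast
    obtain k2 where k2: "k2 < n" "g k2 = e2" using gsurj e(2) by blast
    obtain k3 where k3: "k3 < n" "g k3 = e3" using gsurj e(3) by blast
    show ?thesis using k1 k2 k3 e gab by (intro exI[of _ k1] exI[of _ k2] exI[of _ k3]) metis
  qed
  have "cfg p q n \<alpha> \<beta>"
    unfolding cfg_def
  proof (intro conjI allI impI)
    fix k assume k: "k < n"
    show "fst (\<alpha> k) < p" "snd (\<alpha> k) < q" "fst (\<beta> k) < p" "snd (\<beta> k) < q"
      "fst (\<alpha> k) \<noteq> fst (\<beta> k)" "snd (\<alpha> k) \<noteq> snd (\<beta> k)" using V1[OF inP[OF k]] by auto
  next
    fix k l assume k: "k < n" and l: "l < n"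
    note V = V2[OF inP[OF k] inP[OF l]]
    show "\<alpha> k = \<alpha> l \<Longrightarrow> k = l" using V eqk k l by blast
    show "\<beta> k = \<beta> l \<Longrightarrow> k = l" using V eqk k l by blast
    show "\<alpha> k \<noteq> \<beta> l" using V by blast
    show "(fst (\<alpha> k), snd (\<beta> k)) = (fst (\<alpha> l), snd (\<beta> l)) \<Longrightarrow> k = l" using V eqk k l by blast
    show "(fst (\<beta> k), snd (\<alpha> k)) = (fst (\<beta> l), snd (\<alpha> l)) \<Longrightarrow> k = l" using V eqk k l by blast
    show "(fst (\<alpha> k), snd (\<beta> k)) \<noteq> (fst (\<beta> l), snd (\<alpha> l))" using V by blast
  next
    fix r assume r: "r < p"
    have "\<exists>e1 e2 e3. e1 \<in> P \<and> e2 \<in> P \<and> e3 \<in> P \<and> e1 \<noteq> e2 \<and> e1 \<noteq> e3 \<and> e2 \<noteq> e3 \<and>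
        touchR r e1 \<and> touchR r e2 \<and> touchR r e3" using d r unfolding degP_def by blast
    from deg_tr[OF this] show "\<exists>k1 k2 k3. k1 < n \<and> k2 < n \<and> k3 < n \<and> k1 \<noteq> k2 \<and> k1 \<noteq> k3 \<and> k2 \<noteq> k3 \<and>
        (fst (\<alpha> k1) = r \<or> fst (\<beta> k1) = r) \<and> (fst (\<alpha> k2) = r \<or> fst (\<beta> k2) = r) \<and>
        (fst (\<alpha> k3) = r \<or> fst (\<beta> k3) = r)" by (simp add: touchR_def)
  next
    fix j assume j: "j < q"
    have "\<exists>e1 e2 e3. e1 \<in> P \<and> e2 \<in> P \<and> e3 \<in> P \<and> e1 \<noteq> e2 \<and> e1 \<noteq> e3 \<and> e2 \<noteq> e3 \<and>
        touchC j e1 \<and> touchC j e2 \<and> touchC j e3" using d j unfolding degP_def by blast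
    from deg_tr[OF this] show "\<exists>k1 k2 k3. k1 < n \<and> k2 < n \<and> k3 < n \<and> k1 \<noteq> k2 \<and> k1 \<noteq> k3 \<and> k2 \<noteq> k3 \<and>
        (snd (\<alpha> k1) = j \<or> snd (\<beta> k1) = j) \<and> (snd (\<alpha> k2) = j \<or> snd (\<beta> k2) = j) \<and>
        (snd (\<alpha> k3) = j \<or> snd (\<beta> k3) = j)" by (simp add: touchC_def)
  qed
  then show ?thesis by blast
qed

definition arr :: "nat \<Rightarrow> nat\<times>nat\<times>nat \<Rightarrow> pr" where
  "arr q a = ((fst a, snd (snd a)), (fst (snd a), (snd (snd a) + 1) mod q))"

lemma arr_inj: "inj (arr q)"
  unfolding inj_def arr_def by (auto simp: prod_eq_iff)

lemma modsuc_inj: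
  fixes x y q :: nat
  assumes "x < q" "y < q" "(x+1) mod q = (y+1) mod q" shows "x = y"
proof -
  have hx: "(x+1) mod q = (if x + 1 = q then 0 else x + 1)" using assms(1) by auto
  have hy: "(y+1) mod q = (if y + 1 = q then 0 else y + 1)" using assms(2) by auto
  show ?thesis using assms(3) hx hy assms(1,2) by (auto split: if_splits)
qed

lemma modsuc_ne:
  fixes x q :: nat
  assumes "2 \<le> q" "x < q" shows "(x+1) mod q \<noteq> x"
proof -
  have hx: "(x+1) mod q = (if x + 1 = q then 0 else x + 1)" using assms(2) by auto
  show ?thesis using hx assms by auto
qed

lemma validA:
  assumes q2: "2 \<le> q"
    and A0: "\<forall>a\<in>Ar. fst a < p \<and> fst (snd a) < p \<and> fst a \<noteq> fst (snd a) \<and> snd (snd a) < q"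
    and A1: "\<forall>a\<in>Ar. \<forall>a'\<in>Ar. fst a = fst a' \<and> snd (snd a) = snd (snd a') \<longrightarrow> a = a'"
    and A2: "\<forall>a\<in>Ar. \<forall>a'\<in>Ar. fst (snd a) = fst (snd a') \<and> snd (snd a) = snd (snd a') \<longrightarrow> a = a'"
    and A3: "\<forall>a\<in>Ar. \<forall>a'\<in>Ar. \<not> (fst a = fst (snd a') \<and> snd (snd a) = (snd (snd a') + 1) mod q)"
    and A4: "\<forall>a\<in>Ar. \<forall>a'\<in>Ar. \<not> (fst a = fst (snd a') \<and> (snd (snd a) + 1) mod q = snd (snd a'))"
  shows "validP p q (arr q ` Ar)"
  unfolding validP_def
proof (intro conjI allI impI)
  fix a b assume "(a,b) \<in> arr q ` Ar"
  then obtain t where t: "t \<in> Ar" "(a,b) = arr q t" by blast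
  obtain r1 r2 x where tt: "t = (r1,r2,x)" by (cases t) auto
  have ab: "a = (r1,x)" "b = (r2, (x+1) mod q)" using t(2) tt by (auto simp: arr_def)
  have h: "r1 < p" "r2 < p" "r1 \<noteq> r2" "x < q" using A0 t(1) tt by auto
  have "(x+1) mod q \<noteq> x" using modsuc_ne[OF q2 h(4)] .
  then show "fst a < p" "snd a < q" "fst b < p" "snd b < q" "fst a \<noteq> fst b" "snd a \<noteq> snd b"
    using ab h q2 by auto
next
  fix a b a' b' assume "(a,b) \<in> arr q ` Ar" "(a',b') \<in> arr q ` Ar"
  then obtain t t' where t: "t \<in> Ar" "(a,b) = arr q t" "t' \<in> Ar" "(a',b') = arr q t'" by blast
  obtain r1 r2 x where tt: "t = (r1,r2,x)" by (cases t) auto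
  obtain r1' r2' x' where tt': "t' = (r1',r2',x')" by (cases t') auto
  have ab: "a = (r1,x)" "b = (r2, (x+1) mod q)" using t(2) tt by (auto simp: arr_def)
  have ab': "a' = (r1',x')" "b' = (r2', (x'+1) mod q)" using t(4) tt' by (auto simp: arr_def)
  have xq: "x < q" "x' < q" using A0 t(1,3) tt tt' by auto
  have a1: "r1 = r1' \<and> x = x' \<Longrightarrow> t = t'"
  proof -
    assume "r1 = r1' \<and> x = x'"
    then have "fst t = fst t' \<and> snd (snd t) = snd (snd t')" using tt tt' by simp
    then show "t = t'" using A1 t(1,3) by blast
  qed
  have a2: "r2 = r2' \<and> x = x' \<Longrightarrow> t = t'"
  proof -
    assume "r2 = r2' \<and> x = x'"
    then have "fst (snd t) = fst (snd t') \<and> snd (snd t) = snd (snd t')" using tt tt' by simp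
    then show "t = t'" using A2 t(1,3) by blast
  qed
  have a3: "\<not> (r1 = r2' \<and> x = (x'+1) mod q)"
  proof
    assume "r1 = r2' \<and> x = (x'+1) mod q"
    then have "fst t = fst (snd t') \<and> snd (snd t) = (snd (snd t') + 1) mod q" using tt tt' by simp
    then show False using A3 t(1,3) by blast
  qed
  have a4: "\<not> (r1 = r2' \<and> (x+1) mod q = x')"
  proof
    assume "r1 = r2' \<and> (x+1) mod q = x'"
    then have "fst t = fst (snd t') \<and> (snd (snd t) + 1) mod q = snd (snd t')" using tt tt' by simp
    then show False using A4 t(1,3) by blast
  qed
  have mi: "(x+1) mod q = (x'+1) mod q \<Longrightarrow> x = x'" using modsuc_inj[OF xq] .
  have eq: "t = t' \<Longrightarrow> (a,b) = (a',b')" using t(2,4) by simp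
  show "a = a' \<Longrightarrow> (a, b) = (a', b')" using a1 eq ab ab' by auto
  show "b = b' \<Longrightarrow> (a, b) = (a', b')" using a2 eq ab ab' mi by auto
  show "a \<noteq> b'" using a3 ab ab' by auto
  show "(fst a, snd b) = (fst a', snd b') \<Longrightarrow> (a, b) = (a', b')" using a1 eq ab ab' mi by auto
  show "(fst b, snd a) = (fst b', snd a') \<Longrightarrow> (a, b) = (a', b')" using a2 eq ab ab' by auto
  show "(fst a, snd b) \<noteq> (fst b', snd a')" using a4 ab ab' by auto
qed

definition cpat :: "nat \<Rightarrow> nat" where
  "cpat s = 2 * (s div 3) + (if s mod 3 = 2 then 1 else 0)"

definition Sq :: "nat \<Rightarrow> nat" where
  "Sq q = (3 * q + 1) div 2"

lemma div3: "(t::nat) < 3 \<Longrightarrow> (3 * u + t) div 3 = u" by simp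
lemma mod3: "(t::nat) < 3 \<Longrightarrow> (3 * u + t) mod 3 = t" by simp

lemma cpat_dec: "(t::nat) < 3 \<Longrightarrow> cpat (3 * u + t) = 2 * u + (if t = 2 then 1 else 0)"
  unfolding cpat_def by (simp only: div3 mod3)

lemma s_dec: fixes s :: nat obtains u t where "s = 3 * u + t" "t < 3"
proof -
  have "s = 3 * (s div 3) + s mod 3" by simp
  moreover have "s mod 3 < 3" by simp
  ultimately show ?thesis using that by blast
qed

lemma Sq_iff: "s < Sq q \<longleftrightarrow> 2 * s + 1 \<le> 3 * q"
proof -
  have "s < Sq q \<longleftrightarrow> s + 1 \<le> (3 * q + 1) div 2" unfolding Sq_def by linarith
  also have "\<dots> \<longleftrightarrow> (s + 1) * 2 \<le> 3 * q + 1" by (rule less_eq_div_iff_mult_less_eq) simp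
  finally show ?thesis by (simp add: mult.commute)
qed

lemma cpat_lt: assumes "s < Sq q" shows "cpat s < q"
proof -
  obtain u t where s: "s = 3 * u + t" "t < 3" by (rule s_dec)
  have "2 * s + 1 \<le> 3 * q" using assms Sq_iff by blast
  then have "6 * u + 2 * t + 1 \<le> 3 * q" using s by simp
  moreover have "t = 0 \<or> t = 1 \<or> t = 2" using s(2) by auto
  ultimately have "2 * u + (if t = 2 then 1 else 0) < q" by auto
  then show ?thesis using cpat_dec[OF s(2)] s(1) by simp
qed

lemma cpat_eq: assumes "cpat s = cpat s'" shows "s = s' \<or> (s' = s + 1 \<and> s mod 3 = 0) \<or> (s = s' + 1 \<and> s' mod 3 = 0)"
proof -
  obtain u t where s: "s = 3 * u + t" "t < 3" by (rule s_dec)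
  obtain u' t' where s': "s' = 3 * u' + t'" "t' < 3" by (rule s_dec)
  have e: "2 * u + (if t = 2 then 1 else 0) = 2 * u' + (if t' = 2 then 1 else 0)"
    using assms cpat_dec[OF s(2)] cpat_dec[OF s'(2)] s(1) s'(1) by simp
  have tt: "t = 0 \<or> t = 1 \<or> t = 2" "t' = 0 \<or> t' = 1 \<or> t' = 2" using s(2) s'(2) by auto
  have "u = u' \<and> (t = 2 \<longleftrightarrow> t' = 2)" using e tt by (auto split: if_splits) presburger+
  then show ?thesis using s s' tt by auto
qed

lemma cpat3: "cpat (3*u) = 2*u" "cpat (3*u+1) = 2*u" "cpat (3*u+2) = 2*u+1"
  using cpat_dec[of 0 u] cpat_dec[of 1 u] cpat_dec[of 2 u] by simp_all


lemma cpat_last: assumes "3 \<le> q" shows "cpat (Sq q - 1) = q - 1"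
proof (cases "even q")
  case True
  then obtain v where v: "q = 2*v" by (auto elim: evenE)
  have "Sq q = 3*v" unfolding Sq_def v by simp
  moreover have "3*v - 1 = 3*(v-1) + 2" using assms v by simp
  ultimately show ?thesis using cpat3(3)[of "v-1"] v assms by simp
next
  case False
  then obtain v where v: "q = 2*v+1" by (metis oddE)
  have "Sq q = 3*v + 2" unfolding Sq_def v by simp
  then show ?thesis using cpat3(2)[of v] v by simp
qed

lemma Sq_ge: "3 \<le> q \<Longrightarrow> 5 \<le> Sq q"
  unfolding Sq_def by simp

lemma Sq_lt: assumes "2*u + 1 \<le> q" shows "3*u + 2 \<le> Sq q"
proof -
  have "(6*u+4) div 2 \<le> (3*q+1) div 2" using assms by (intro div_le_mono) simp
  moreover have "(6*u+4) div 2 = 3*u+2" by simp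
  ultimately show ?thesis unfolding Sq_def by simp
qed

lemma Sq_lt2: assumes "2*u + 2 \<le> q" shows "3*u + 3 \<le> Sq q"
proof -
  have "(6*u+7) div 2 \<le> (3*q+1) div 2" using assms by (intro div_le_mono) simp
  moreover have "(6*u+7) div 2 = 3*u+3" by simp
  ultimately show ?thesis unfolding Sq_def by simp
qed

lemma colslots:
  assumes j: "j < q" and q3: "3 \<le> q"
  shows "\<exists>s1 s2 s3. s1 < Sq q \<and> s2 < Sq q \<and> s3 < Sq q \<and> s1 \<noteq> s2 \<and> s1 \<noteq> s3 \<and> s2 \<noteq> s3 \<and>
     (cpat s1 = j \<or> (cpat s1 + 1) mod q = j) \<and> (cpat s2 = j \<or> (cpat s2 + 1) mod q = j) \<and>
     (cpat s3 = j \<or> (cpat s3 + 1) mod q = j)"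
proof (cases "even j")
  case True
  then obtain u where u: "j = 2 * u" by (auto elim: evenE)
  have c1: "cpat (3*u) = j" "cpat (3*u+1) = j" using u cpat3 by auto
  have l1: "3*u + 1 < Sq q" using Sq_lt[of u q] u j by simp
  show ?thesis
  proof (cases "u = 0")
    case True
    have "cpat (Sq q - 1) = q - 1" using cpat_last[OF q3] .
    then have "(cpat (Sq q - 1) + 1) mod q = j" using True u q3 by simp
    moreover have "Sq q - 1 < Sq q" "Sq q - 1 \<noteq> 0" "Sq q - 1 \<noteq> 1" using Sq_ge[OF q3] by auto
    ultimately show ?thesis using c1 l1 True
      by (intro exI[of _ "3*u"] exI[of _ "3*u+1"] exI[of _ "Sq q - 1"]) auto
  next
    case False
    have e: "3*u - 1 = 3*(u-1) + 2" using False by simp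
    have c3: "cpat (3*u - 1) = j - 1" using u False cpat3(3)[of "u-1"] e by simp
    have "(cpat (3*u - 1) + 1) mod q = j" using c3 False u j by simp
    then show ?thesis using c1 l1 False
      by (intro exI[of _ "3*u"] exI[of _ "3*u+1"] exI[of _ "3*u - 1"]) auto
  qed
next
  case False
  then obtain u where u: "j = 2 * u + 1" by (metis oddE)
  have c1: "cpat (3*u+2) = j" "cpat (3*u) = j - 1" "cpat (3*u+1) = j - 1" using u cpat3 by auto
  have l1: "3*u + 2 < Sq q" using Sq_lt2[of "u" q] u j by simp
  have "(cpat (3*u) + 1) mod q = j" "(cpat (3*u+1) + 1) mod q = j" using c1 u j by simp_all
  then show ?thesis using c1 l1
    by (intro exI[of _ "3*u+2"] exI[of _ "3*u"] exI[of _ "3*u+1"]) auto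
qed

lemma degCore:
  fixes f :: "nat \<Rightarrow> nat\<times>nat\<times>nat"
  assumes q3: "3 \<le> q" and F: "\<forall>s<Sq q. snd (snd (f s)) = cpat s"
    and inj: "inj_on f {..<Sq q}"
    and R: "\<forall>r<p. \<exists>s1 s2 s3. s1 < Sq q \<and> s2 < Sq q \<and> s3 < Sq q \<and> s1 \<noteq> s2 \<and> s1 \<noteq> s3 \<and> s2 \<noteq> s3 \<and>
        (fst (f s1) = r \<or> fst (snd (f s1)) = r) \<and> (fst (f s2) = r \<or> fst (snd (f s2)) = r) \<and>
        (fst (f s3) = r \<or> fst (snd (f s3)) = r)"
  shows "degP p q (arr q ` f ` {..<Sq q})"
proof -
  have ai: "arr q a = arr q b \<Longrightarrow> a = b" for a b by (rule injD[OF arr_inj])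
  have fi: "s < Sq q \<Longrightarrow> s' < Sq q \<Longrightarrow> f s = f s' \<Longrightarrow> s = s'" for s s' using inj by (auto simp: inj_on_def)
  have tR: "touchR r (arr q a) \<longleftrightarrow> fst a = r \<or> fst (snd a) = r" for r a by (simp add: touchR_def arr_def)
  have tC: "touchC j (arr q a) \<longleftrightarrow> snd (snd a) = j \<or> (snd (snd a) + 1) mod q = j" for j a by (simp add: touchC_def arr_def)
  show ?thesis unfolding degP_def
  proof (intro conjI allI impI)
    fix r assume r: "r < p"
    obtain s1 s2 s3 where s: "s1 < Sq q" "s2 < Sq q" "s3 < Sq q" "s1 \<noteq> s2" "s1 \<noteq> s3" "s2 \<noteq> s3"
        "fst (f s1) = r \<or> fst (snd (f s1)) = r" "fst (f s2) = r \<or> fst (snd (f s2)) = r"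
        "fst (f s3) = r \<or> fst (snd (f s3)) = r" using R r by blast
    have d: "arr q (f s1) \<noteq> arr q (f s2)" "arr q (f s1) \<noteq> arr q (f s3)" "arr q (f s2) \<noteq> arr q (f s3)"
      using s(1-6) ai fi by metis+
    show "\<exists>e1 e2 e3. e1 \<in> arr q ` f ` {..<Sq q} \<and> e2 \<in> arr q ` f ` {..<Sq q} \<and> e3 \<in> arr q ` f ` {..<Sq q} \<and>
        e1 \<noteq> e2 \<and> e1 \<noteq> e3 \<and> e2 \<noteq> e3 \<and> touchR r e1 \<and> touchR r e2 \<and> touchR r e3"
      by (rule exI[of _ "arr q (f s1)"], rule exI[of _ "arr q (f s2)"], rule exI[of _ "arr q (f s3)"])
         (use s d in \<open>auto simp: tR\<close>)
  next
    fix j assume j: "j < q"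
    obtain s1 s2 s3 where s: "s1 < Sq q" "s2 < Sq q" "s3 < Sq q" "s1 \<noteq> s2" "s1 \<noteq> s3" "s2 \<noteq> s3"
      "(cpat s1 = j \<or> (cpat s1 + 1) mod q = j)" "(cpat s2 = j \<or> (cpat s2 + 1) mod q = j)"
      "(cpat s3 = j \<or> (cpat s3 + 1) mod q = j)" using colslots[OF j q3] by blast
    have d: "arr q (f s1) \<noteq> arr q (f s2)" "arr q (f s1) \<noteq> arr q (f s3)" "arr q (f s2) \<noteq> arr q (f s3)"
      using s(1-6) ai fi by metis+
    have x: "snd (snd (f s1)) = cpat s1" "snd (snd (f s2)) = cpat s2" "snd (snd (f s3)) = cpat s3"
      using F s(1-3) by auto
    show "\<exists>e1 e2 e3. e1 \<in> arr q ` f ` {..<Sq q} \<and> e2 \<in> arr q ` f ` {..<Sq q} \<and> e3 \<in> arr q ` f ` {..<Sq q} \<and>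
        e1 \<noteq> e2 \<and> e1 \<noteq> e3 \<and> e2 \<noteq> e3 \<and> touchC j e1 \<and> touchC j e2 \<and> touchC j e3"
      by (rule exI[of _ "arr q (f s1)"], rule exI[of _ "arr q (f s2)"], rule exI[of _ "arr q (f s3)"])
         (use s d x in \<open>auto simp: tC\<close>)
  qed
qed

lemma mod_suc_ne: assumes "2 \<le> (h::nat)" shows "s mod h \<noteq> (s + 1) mod h"
proof -
  have "(s + 1) mod h = (if Suc (s mod h) = h then 0 else Suc (s mod h))" using mod_Suc[of s h] by simp
  moreover have "s mod h < h" using assms by simp
  ultimately show ?thesis using assms by auto
qed

lemma even_case:
  fixes p q n :: nat
  assumes ev: "even p" and p4: "4 \<le> p" and pq: "p \<le> q" and lo: "3*q \<le> 2*n" and hi: "2*n \<le> p*q"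
  shows "\<exists>P. validP p q P \<and> degP p q P \<and> finite P \<and> card P = n"
proof -
  define h where "h = p div 2"
  have ph: "p = 2*h" using ev h_def by simp
  have h2: "2 \<le> h" using p4 ph by simp
  have q3: "3 \<le> q" using p4 pq by simp
  define Me where "Me = (\<lambda>(i,x). (2*i, 2*i+1, x::nat)) ` ({..<h} \<times> {..<q})"
  define fe where "fe s = (2*(s mod h), 2*(s mod h)+1, cpat s)" for s
  have Me_el: "a \<in> Me \<Longrightarrow> \<exists>i x. a = (2*i, 2*i+1, x) \<and> i < h \<and> x < q" for a
    unfolding Me_def by auto
  have vM: "validP p q (arr q ` Me)"
  proof (rule validA)
    show "2 \<le> q" using q3 by simp
    show "\<forall>a\<in>Me. fst a < p \<and> fst (snd a) < p \<and> fst a \<noteq> fst (snd a) \<and> snd (snd a) < q"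
      using Me_el ph by fastforce
    show "\<forall>a\<in>Me. \<forall>a'\<in>Me. fst a = fst a' \<and> snd (snd a) = snd (snd a') \<longrightarrow> a = a'"
    proof (intro ballI impI)
      fix a a' assume a: "a \<in> Me" "a' \<in> Me" and c: "fst a = fst a' \<and> snd (snd a) = snd (snd a')"
      obtain i x where "a = (2*i, 2*i+1, x)" using Me_el[OF a(1)] by blast
      moreover obtain i' x' where "a' = (2*i', 2*i'+1, x')" using Me_el[OF a(2)] by blast
      ultimately show "a = a'" using c by auto
    qed
    show "\<forall>a\<in>Me. \<forall>a'\<in>Me. fst (snd a) = fst (snd a') \<and> snd (snd a) = snd (snd a') \<longrightarrow> a = a'"
    proof (intro ballI impI)
      fix a a' assume a: "a \<in> Me" "a' \<in> Me" and c: "fst (snd a) = fst (snd a') \<and> snd (snd a) = snd (snd a')"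
      obtain i x where "a = (2*i, 2*i+1, x)" using Me_el[OF a(1)] by blast
      moreover obtain i' x' where "a' = (2*i', 2*i'+1, x')" using Me_el[OF a(2)] by blast
      ultimately show "a = a'" using c by auto
    qed
    show "\<forall>a\<in>Me. \<forall>a'\<in>Me. \<not> (fst a = fst (snd a') \<and> snd (snd a) = (snd (snd a') + 1) mod q)"
    proof (intro ballI notI)
      fix a a' assume a: "a \<in> Me" "a' \<in> Me" and c: "fst a = fst (snd a') \<and> snd (snd a) = (snd (snd a') + 1) mod q"
      obtain i x where "a = (2*i, 2*i+1, x)" using Me_el[OF a(1)] by blast
      moreover obtain i' x' where "a' = (2*i', 2*i'+1, x')" using Me_el[OF a(2)] by blast
      ultimately have "2*i = 2*i'+1" using c by simp
      then show False by presburger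
    qed
    show "\<forall>a\<in>Me. \<forall>a'\<in>Me. \<not> (fst a = fst (snd a') \<and> (snd (snd a) + 1) mod q = snd (snd a'))"
    proof (intro ballI notI)
      fix a a' assume a: "a \<in> Me" "a' \<in> Me" and c: "fst a = fst (snd a') \<and> (snd (snd a) + 1) mod q = snd (snd a')"
      obtain i x where "a = (2*i, 2*i+1, x)" using Me_el[OF a(1)] by blast
      moreover obtain i' x' where "a' = (2*i', 2*i'+1, x')" using Me_el[OF a(2)] by blast
      ultimately have "2*i = 2*i'+1" using c by simp
      then show False by presburger
    qed
  qed
  have sub: "fe ` {..<Sq q} \<subseteq> Me"
  proof
    fix a assume "a \<in> fe ` {..<Sq q}"
    then obtain s where s: "s < Sq q" "a = fe s" by blast
    have "s mod h < h" using h2 by simp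
    moreover have "cpat s < q" using cpat_lt[OF s(1)] .
    ultimately show "a \<in> Me" unfolding Me_def s(2) fe_def by auto
  qed
  have inj: "inj_on fe {..<Sq q}"
  proof (rule inj_onI)
    fix s s' assume s: "s \<in> {..<Sq q}" "s' \<in> {..<Sq q}" and e: "fe s = fe s'"
    have m: "s mod h = s' mod h" and c: "cpat s = cpat s'" using e unfolding fe_def by auto
    show "s = s'" using cpat_eq[OF c] m mod_suc_ne[OF h2, of s] mod_suc_ne[OF h2, of s'] by auto
  qed
  have S3h: "3*h \<le> Sq q" unfolding Sq_def using pq ph by simp
  have deg: "degP p q (arr q ` fe ` {..<Sq q})"
  proof (rule degCore[OF q3])
    show "\<forall>s<Sq q. snd (snd (fe s)) = cpat s" by (simp add: fe_def)
    show "inj_on fe {..<Sq q}" using inj .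
    show "\<forall>r<p. \<exists>s1 s2 s3. s1 < Sq q \<and> s2 < Sq q \<and> s3 < Sq q \<and> s1 \<noteq> s2 \<and> s1 \<noteq> s3 \<and> s2 \<noteq> s3 \<and>
        (fst (fe s1) = r \<or> fst (snd (fe s1)) = r) \<and> (fst (fe s2) = r \<or> fst (snd (fe s2)) = r) \<and>
        (fst (fe s3) = r \<or> fst (snd (fe s3)) = r)"
    proof (intro allI impI)
      fix r assume r: "r < p"
      define i where "i = r div 2"
      have i: "i < h" "r = 2*i \<or> r = 2*i+1" using r ph i_def by auto
      have md: "(i + k*h) mod h = i" for k using i(1) by simp
      have rr: "fst (fe (i + k*h)) = r \<or> fst (snd (fe (i + k*h))) = r" for k
        using md[of k] i(2) by (auto simp: fe_def)
      show "\<exists>s1 s2 s3. s1 < Sq q \<and> s2 < Sq q \<and> s3 < Sq q \<and> s1 \<noteq> s2 \<and> s1 \<noteq> s3 \<and> s2 \<noteq> s3 \<and>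
        (fst (fe s1) = r \<or> fst (snd (fe s1)) = r) \<and> (fst (fe s2) = r \<or> fst (snd (fe s2)) = r) \<and>
        (fst (fe s3) = r \<or> fst (snd (fe s3)) = r)"
        apply (rule exI[of _ "i + 0*h"], rule exI[of _ "i + 1*h"], rule exI[of _ "i + 2*h"])
        using rr[of 0] rr[of 1] rr[of 2] i(1) h2 S3h by auto
    qed
  qed
  have finM: "finite (arr q ` Me)" unfolding Me_def by simp
  have subC: "arr q ` fe ` {..<Sq q} \<subseteq> arr q ` Me" using sub by blast
  have cC: "card (arr q ` fe ` {..<Sq q}) \<le> n"
  proof -
    have "card (arr q ` fe ` {..<Sq q}) \<le> card (fe ` {..<Sq q})" by (rule card_image_le) simp
    also have "\<dots> \<le> card {..<Sq q}" by (rule card_image_le) simp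
    also have "\<dots> = Sq q" by simp
    also have "\<dots> \<le> n" unfolding Sq_def using lo by simp
    finally show ?thesis .
  qed
  have cM: "card (arr q ` Me) = h * q"
  proof -
    have "card (arr q ` Me) = card Me" by (rule card_image) (rule inj_on_subset[OF arr_inj], simp)
    also have "card Me = card ({..<h} \<times> {..<q})" unfolding Me_def
      by (rule card_image) (auto simp: inj_on_def)
    finally show ?thesis by (simp add: card_cartesian_product)
  qed
  have nM: "n \<le> card (arr q ` Me)" using cM hi ph by simp
  obtain P where P: "arr q ` fe ` {..<Sq q} \<subseteq> P" "P \<subseteq> arr q ` Me" "card P = n"
    using extend_set[OF finM subC cC nM] by blast
  have "validP p q P" using validP_mono[OF vM P(2)] .
  moreover have "degP p q P" using degP_mono[OF deg P(1)] .
  moreover have "finite P" using finM P(2) finite_subset by blast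
  ultimately show ?thesis using P(3) by blast
qed

context
  fixes p q G :: nat
  assumes pG: "p = 2*G + 3"
begin

definition Band :: "(nat\<times>nat\<times>nat) set" where
  "Band = (\<lambda>(i,x). (2*i, 2*i+1, x)) ` ({1..G} \<times> {..<q})"
definition PlA :: "(nat\<times>nat\<times>nat) set" where
  "PlA = (\<lambda>x. if even x \<and> x + 2 \<le> q then (0, p-1, x) else (0, 1, x)) ` {..<q}"
definition Bs :: "(nat\<times>nat\<times>nat) set" where
  "Bs = (\<lambda>u. (p-1, 1, 2*u)) ` {..<q div 2}"
definition Mo :: "(nat\<times>nat\<times>nat) set" where
  "Mo = Band \<union> PlA \<union> Bs"

lemma Mo_el:
  assumes "a \<in> Mo"
  shows "(\<exists>i x. a = (2*i, 2*i+1, x) \<and> 1 \<le> i \<and> i \<le> G \<and> x < q) \<or>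
         (\<exists>x. a = (0, 2*G+2, x) \<and> even x \<and> x + 2 \<le> q) \<or>
         (\<exists>x. a = (0, 1, x) \<and> x < q \<and> \<not> (even x \<and> x + 2 \<le> q)) \<or>
         (\<exists>x. a = (2*G+2, 1, x) \<and> even x \<and> x + 2 \<le> q)"
proof -
  have "a \<in> Band \<or> a \<in> PlA \<or> a \<in> Bs" using assms unfolding Mo_def by blast
  then show ?thesis
  proof (elim disjE)
    assume "a \<in> Band" then show ?thesis unfolding Band_def by auto
  next
    assume "a \<in> PlA"
    then obtain x where x: "x < q" "a = (if even x \<and> x + 2 \<le> q then (0, p-1, x) else (0, 1, x))"
      unfolding PlA_def by blast
    then show ?thesis using pG by (cases "even x \<and> x + 2 \<le> q") auto
  next
    assume "a \<in> Bs"
    then obtain u where u: "u < q div 2" "a = (p-1, 1, 2*u)" unfolding Bs_def by blast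
    have "2*u + 2 \<le> q" using u(1) by linarith
    then show ?thesis using u(2) pG by auto
  qed
qed

lemma Mo_band: "1 \<le> i \<Longrightarrow> i \<le> G \<Longrightarrow> x < q \<Longrightarrow> (2*i, 2*i+1, x) \<in> Mo"
  unfolding Mo_def Band_def by force
lemma Mo_A: "even x \<Longrightarrow> x + 2 \<le> q \<Longrightarrow> (0, p-1, x) \<in> Mo"
  unfolding Mo_def PlA_def by (rule UnI1, rule UnI2, rule image_eqI[of _ _ x]) auto
lemma Mo_Pl: "x < q \<Longrightarrow> \<not> (even x \<and> x + 2 \<le> q) \<Longrightarrow> (0, 1, x) \<in> Mo"
  unfolding Mo_def PlA_def by (rule UnI1, rule UnI2, rule image_eqI[of _ _ x]) auto
lemma Mo_B: "even x \<Longrightarrow> x + 2 \<le> q \<Longrightarrow> (p-1, 1, x) \<in> Mo"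
proof -
  assume "even x" "x + 2 \<le> q"
  then obtain u where u: "x = 2*u" "u < q div 2" by (auto elim!: evenE)
  then show "(p-1, 1, x) \<in> Mo" unfolding Mo_def Bs_def by blast
qed

lemma Mo_L1:
  assumes "a \<in> Mo"
  shows "fst a = 0 \<or> (even (fst a) \<and> 2 \<le> fst a \<and> fst a \<le> 2*G) \<or>
    (fst a = 2*G+2 \<and> even (snd (snd a)) \<and> snd (snd a) + 2 \<le> q)"
  using Mo_el[OF assms] by (elim disjE exE conjE) auto

lemma Mo_L2:
  assumes "a \<in> Mo"
  shows "fst (snd a) = 1 \<or> (odd (fst (snd a)) \<and> 3 \<le> fst (snd a) \<and> fst (snd a) \<le> 2*G+1) \<or>
    (fst (snd a) = 2*G+2 \<and> even (snd (snd a)) \<and> snd (snd a) + 2 \<le> q)"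
  using Mo_el[OF assms] by (elim disjE exE conjE) auto

lemma Mo_valid:
  assumes q2: "2 \<le> q"
  shows "validP p q (arr q ` Mo)"
proof (rule validA[OF q2])
  show "\<forall>a\<in>Mo. fst a < p \<and> fst (snd a) < p \<and> fst a \<noteq> fst (snd a) \<and> snd (snd a) < q"
  proof
    fix a assume "a \<in> Mo"
    from Mo_el[OF this] show "fst a < p \<and> fst (snd a) < p \<and> fst a \<noteq> fst (snd a) \<and> snd (snd a) < q"
      using pG by (elim disjE exE conjE) auto
  qed
  show "\<forall>a\<in>Mo. \<forall>a'\<in>Mo. fst a = fst a' \<and> snd (snd a) = snd (snd a') \<longrightarrow> a = a'"
  proof (intro ballI impI)
    fix a a' assume a: "a \<in> Mo" "a' \<in> Mo" and c: "fst a = fst a' \<and> snd (snd a) = snd (snd a')"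
    from Mo_el[OF a(1)] Mo_el[OF a(2)] show "a = a'" using c
      by (elim disjE exE conjE) auto
  qed
  show "\<forall>a\<in>Mo. \<forall>a'\<in>Mo. fst (snd a) = fst (snd a') \<and> snd (snd a) = snd (snd a') \<longrightarrow> a = a'"
  proof (intro ballI impI)
    fix a a' assume a: "a \<in> Mo" "a' \<in> Mo" and c: "fst (snd a) = fst (snd a') \<and> snd (snd a) = snd (snd a')"
    from Mo_el[OF a(1)] Mo_el[OF a(2)] show "a = a'" using c
      by (elim disjE exE conjE) auto
  qed
  show "\<forall>a\<in>Mo. \<forall>a'\<in>Mo. \<not> (fst a = fst (snd a') \<and> snd (snd a) = (snd (snd a') + 1) mod q)"
  proof (intro ballI notI)
    fix a a' assume a: "a \<in> Mo" "a' \<in> Mo" and c: "fst a = fst (snd a') \<and> snd (snd a) = (snd (snd a') + 1) mod q"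
    have c1: "fst a = fst (snd a')" using c by simp
    have h1: "fst a = 2*G+2 \<and> even (snd (snd a))" using Mo_L1[OF a(1)] Mo_L2[OF a(2)] c1 by presburger
    have h2: "even (snd (snd a')) \<and> snd (snd a') + 2 \<le> q" using Mo_L2[OF a(2)] h1 c1 by presburger
    have "(snd (snd a') + 1) mod q = snd (snd a') + 1" using h2 by simp
    then show False using h1 h2 c by simp
  qed
  show "\<forall>a\<in>Mo. \<forall>a'\<in>Mo. \<not> (fst a = fst (snd a') \<and> (snd (snd a) + 1) mod q = snd (snd a'))"
  proof (intro ballI notI)
    fix a a' assume a: "a \<in> Mo" "a' \<in> Mo" and c: "fst a = fst (snd a') \<and> (snd (snd a) + 1) mod q = snd (snd a')"
    have c1: "fst a = fst (snd a')" using c by simp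
    have h1: "fst a = 2*G+2 \<and> even (snd (snd a)) \<and> snd (snd a) + 2 \<le> q" using Mo_L1[OF a(1)] Mo_L2[OF a(2)] c1 by presburger
    have h2: "even (snd (snd a'))" using Mo_L2[OF a(2)] h1 c1 by presburger
    have "(snd (snd a) + 1) mod q = snd (snd a) + 1" using h1 by simp
    then have "snd (snd a') = snd (snd a) + 1" using c by simp
    then show False using h1 h2 by presburger
  qed
qed


definition rro :: "nat \<Rightarrow> nat \<times> nat" where
  "rro s = (if s = 0 then (0, p-1) else if s = 1 then (p-1, 1) else if s = 3 then (0, p-1)
    else if s = 4 then (p-1, 1)
    else if s = 2 then (if p = 5 then (2,3) else (0,1))
    else if p = 3 then (if s mod 3 = 0 then (0, p-1) else if s mod 3 = 1 then (p-1, 1) else (0, 1))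
    else if p = 5 then (if s = Sq q - 1 then (0,1) else if s mod 3 = 1 then (0, p-1) else (2,3))
    else (2*(1 + (s-5) mod G), 2*(1 + (s-5) mod G) + 1))"

definition fo :: "nat \<Rightarrow> nat\<times>nat\<times>nat" where
  "fo s = (fst (rro s), snd (rro s), cpat s)"

lemma fo_in:
  assumes q4: "4 \<le> q" and pq: "p \<le> q" and p3: "p = 3 \<Longrightarrow> even q" and s: "s < Sq q"
  shows "fo s \<in> Mo"
proof -
  have cl: "cpat s < q" using cpat_lt[OF s] .
  consider "s = 0" | "s = 1" | "s = 2" | "s = 3" | "s = 4" | "5 \<le> s" by linarith
  then show ?thesis
  proof cases
    case 1 then show ?thesis unfolding fo_def rro_def using Mo_A[of 0] q4 by (simp add: cpat_def)
  next
    case 2 then show ?thesis unfolding fo_def rro_def using Mo_B[of 0] q4 by (simp add: cpat_def)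
  next
    case 3
    show ?thesis
    proof (cases "p = 5")
      case True
      then have "G = 1" using pG by simp
      then show ?thesis unfolding fo_def rro_def using Mo_band[of 1 1] q4 3 True by (simp add: cpat_def)
    next
      case False
      then show ?thesis unfolding fo_def rro_def using Mo_Pl[of 1] q4 3 by (simp add: cpat_def)
    qed
  next
    case 4 then show ?thesis unfolding fo_def rro_def using Mo_A[of 2] q4 by (simp add: cpat_def)
  next
    case 5 then show ?thesis unfolding fo_def rro_def using Mo_B[of 2] q4 by (simp add: cpat_def)
  next
    case 6
    have ns: "s \<noteq> 0" "s \<noteq> 1" "s \<noteq> 2" "s \<noteq> 3" "s \<noteq> 4" using 6 by auto
    show ?thesis
    proof (cases "p = 3")
      case p3': True
      have eq: "even q" using p3 p3' by simp
      consider "s mod 3 = 0" | "s mod 3 = 1" | "s mod 3 = 2" by linarith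
      then show ?thesis
      proof cases
        case 1
        have "even (cpat s)" "cpat s + 2 \<le> q" using 1 s eq unfolding cpat_def Sq_def by presburger+
        then show ?thesis unfolding fo_def rro_def using Mo_A[of "cpat s"] ns 1 p3' by simp
      next
        case 2
        have "even (cpat s)" "cpat s + 2 \<le> q" using 2 s eq unfolding cpat_def Sq_def by presburger+
        then show ?thesis unfolding fo_def rro_def using Mo_B[of "cpat s"] ns 2 p3' by simp
      next
        case 3
        have "odd (cpat s)" using 3 unfolding cpat_def by presburger
        then show ?thesis unfolding fo_def rro_def using Mo_Pl[of "cpat s"] cl ns 3 p3' by simp
      qed
    next
      case np3: False
      show ?thesis
      proof (cases "p = 5")
        case p5: True
        have G1: "G = 1" using pG p5 by simp
        show ?thesis
        proof (cases "s = Sq q - 1")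
          case True
          have "cpat s = q - 1" using cpat_last[of q] q4 True by simp
          then show ?thesis unfolding fo_def rro_def using Mo_Pl[of "q - 1"] q4 ns True p5 by simp
        next
          case nl: False
          show ?thesis
          proof (cases "s mod 3 = 1")
            case True
            have "s + 2 \<le> Sq q" using s nl by simp
            then have "even (cpat s)" "cpat s + 2 \<le> q" using True unfolding cpat_def Sq_def by presburger+
            then show ?thesis unfolding fo_def rro_def using Mo_A[of "cpat s"] ns True nl p5 by simp
          next
            case False
            then show ?thesis unfolding fo_def rro_def using Mo_band[of 1 "cpat s"] G1 cl ns nl p5 by simp
          qed
        qed
      next
        case np5: False
        have G2: "2 \<le> G" using pG np3 np5 by simp
        define b where "b = 1 + (s - 5) mod G"
        have "(s - 5) mod G < G" using G2 by simp
        then have b: "1 \<le> b" "b \<le> G" using b_def by auto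
        have "fo s = (2*b, 2*b+1, cpat s)" unfolding fo_def rro_def b_def using ns np3 np5 by simp
        then show ?thesis using Mo_band[OF b cl] by simp
      qed
    qed
  qed
qed

lemma rro_ne:
  assumes p3: "3 \<le> p" and m: "s mod 3 = 0" and s: "s + 1 < Sq q"
  shows "rro s \<noteq> rro (s + 1)"
proof -
  have "s = 0 \<or> s = 3 \<or> 6 \<le> s" using m by presburger
  then consider "s = 0" | "s = 3" | "6 \<le> s" by blast
  then show ?thesis
  proof cases
    case 1 then show ?thesis unfolding rro_def using p3 by simp
  next
    case 2 then show ?thesis unfolding rro_def using p3 by simp
  next
    case 3
    have ns: "s \<noteq> 0" "s \<noteq> 1" "s \<noteq> 2" "s \<noteq> 3" "s \<noteq> 4" "s + 1 \<noteq> 0" "s + 1 \<noteq> 1" "s + 1 \<noteq> 2" "s + 1 \<noteq> 3" "s + 1 \<noteq> 4"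
      using 3 by auto
    have m1: "(s + 1) mod 3 = 1" using m by presburger
    show ?thesis
    proof (cases "p = 3")
      case True then show ?thesis unfolding rro_def using ns m m1 by simp
    next
      case np3: False
      show ?thesis
      proof (cases "p = 5")
        case True
        have "s \<noteq> Sq q - 1" using s by simp
        then show ?thesis unfolding rro_def using ns m m1 True by simp
      next
        case np5: False
        have G2: "2 \<le> G" using pG np3 np5 p3 by simp
        have "(s - 5) mod G \<noteq> (s - 5 + 1) mod G" using mod_suc_ne[OF G2] .
        moreover have "s + 1 - 5 = s - 5 + 1" using 3 by simp
        ultimately show ?thesis unfolding rro_def using ns np3 np5 by simp
      qed
    qed
  qed
qed

lemma fo_inj:
  assumes p3: "3 \<le> p"
  shows "inj_on fo {..<Sq q}"
proof (rule inj_onI)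
  fix s s' assume s: "s \<in> {..<Sq q}" "s' \<in> {..<Sq q}" and e: "fo s = fo s'"
  have c: "cpat s = cpat s'" and r: "rro s = rro s'" using e unfolding fo_def by (auto simp: prod_eq_iff)
  show "s = s'"
  proof (rule ccontr)
    assume ne: "s \<noteq> s'"
    from cpat_eq[OF c] ne have "(s' = s + 1 \<and> s mod 3 = 0) \<or> (s = s' + 1 \<and> s' mod 3 = 0)" by auto
    then show False
    proof
      assume h: "s' = s + 1 \<and> s mod 3 = 0"
      then show False using rro_ne[OF p3, of s] s r by auto
    next
      assume h: "s = s' + 1 \<and> s' mod 3 = 0"
      then show False using rro_ne[OF p3, of s'] s r by auto
    qed
  qed
qed

lemma fo_rows:
  assumes q4: "4 \<le> q" and pq: "p \<le> q"
  shows "\<forall>r<p. \<exists>s1 s2 s3. s1 < Sq q \<and> s2 < Sq q \<and> s3 < Sq q \<and> s1 \<noteq> s2 \<and> s1 \<noteq> s3 \<and> s2 \<noteq> s3 \<and>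
        (fst (fo s1) = r \<or> fst (snd (fo s1)) = r) \<and> (fst (fo s2) = r \<or> fst (snd (fo s2)) = r) \<and>
        (fst (fo s3) = r \<or> fst (snd (fo s3)) = r)"
proof (intro allI impI)
  fix r assume r: "r < p"
  have S5: "5 \<le> Sq q" using Sq_ge[of q] q4 by simp
  have S3G: "3*G + 5 \<le> Sq q" using pq pG unfolding Sq_def by simp
  define w where "w = (if p = 5 then Sq q - 1 else 2)"
  have S8: "p = 5 \<Longrightarrow> 8 \<le> Sq q" using pq unfolding Sq_def by simp
  have w: "w < Sq q" "w \<noteq> 0" "w \<noteq> 1" "w \<noteq> 3" "w \<noteq> 4" "rro w = (0,1)"
    using S5 S8 by (auto simp: w_def rro_def)
  have f0: "fo 0 = (0, p-1, 0)" "fo 1 = (p-1, 1, 0)" "fo 3 = (0, p-1, 2)" "fo 4 = (p-1, 1, 2)"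
    by (simp_all add: fo_def rro_def cpat_def)
  have fw: "fst (fo w) = 0" "fst (snd (fo w)) = 1" using w(6) by (simp_all add: fo_def)
  consider "r = 0" | "r = 1" | "r = p - 1" | "2 \<le> r \<and> r \<le> p - 2" using r by linarith
  then show "\<exists>s1 s2 s3. s1 < Sq q \<and> s2 < Sq q \<and> s3 < Sq q \<and> s1 \<noteq> s2 \<and> s1 \<noteq> s3 \<and> s2 \<noteq> s3 \<and>
        (fst (fo s1) = r \<or> fst (snd (fo s1)) = r) \<and> (fst (fo s2) = r \<or> fst (snd (fo s2)) = r) \<and>
        (fst (fo s3) = r \<or> fst (snd (fo s3)) = r)"
  proof cases
    case 1 then show ?thesis using w fw f0 S5
      by (intro exI[of _ 0] exI[of _ 3] exI[of _ w]) auto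
  next
    case 2 then show ?thesis using w fw f0 S5
      by (intro exI[of _ 1] exI[of _ 4] exI[of _ w]) auto
  next
    case 3 then show ?thesis using f0 S5
      by (intro exI[of _ 0] exI[of _ 1] exI[of _ 3]) auto
  next
    case 4
    then have p5: "5 \<le> p" using pG by simp
    show ?thesis
    proof (cases "p = 5")
      case True
      have rr: "rro 2 = (2,3)" "rro 5 = (2,3)" "rro 6 = (2,3)" unfolding rro_def using True S8 by simp_all
      have r23: "r = 2 \<or> r = 3" using 4 True by auto
      have ff: "fst (fo 2) = 2" "fst (snd (fo 2)) = 3" "fst (fo 5) = 2" "fst (snd (fo 5)) = 3"
        "fst (fo 6) = 2" "fst (snd (fo 6)) = 3" by (simp_all add: fo_def rr)
      show ?thesis using ff S8[OF True] r23
        by (intro exI[of _ 2] exI[of _ 5] exI[of _ 6]) auto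
    next
      case np5: False
      have G2: "2 \<le> G" using pG np5 p5 by simp
      define b where "b = r div 2"
      have b: "1 \<le> b" "b \<le> G" "r = 2*b \<or> r = 2*b+1" using 4 pG b_def by auto
      have rk: "rro (5 + (b - 1) + k*G) = (2*b, 2*b+1)" for k
      proof -
        have e5: "5 + (b - 1) + k*G - 5 = (b - 1) + k*G" by simp
        have "((b - 1) + k*G) mod G = (b - 1) mod G" by (rule mod_mult_self1)
        also have "\<dots> = b - 1" using b G2 by simp
        finally have "(5 + (b - 1) + k*G - 5) mod G = b - 1" using e5 by simp
        moreover have "5 + (b - 1) + k*G \<noteq> 0" "5 + (b - 1) + k*G \<noteq> 1" "5 + (b - 1) + k*G \<noteq> 2"
           "5 + (b - 1) + k*G \<noteq> 3" "5 + (b - 1) + k*G \<noteq> 4" by auto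
        moreover have "p \<noteq> 3" using p5 by simp
        ultimately show ?thesis unfolding rro_def using np5 b by simp
      qed
      have lt: "5 + (b - 1) + 2*G < Sq q" using S3G b by simp
      show ?thesis
        apply (rule exI[of _ "5 + (b - 1) + 0*G"], rule exI[of _ "5 + (b - 1) + 1*G"], rule exI[of _ "5 + (b - 1) + 2*G"])
        using rk[of 0] rk[of 1] rk[of 2] lt G2 b(3) by (auto simp: fo_def)
    qed
  qed
qed

lemma odd_case:
  fixes n :: nat
  assumes q4: "4 \<le> q" and pq: "p \<le> q" and p3: "p = 3 \<Longrightarrow> even q" and lo: "3*q \<le> 2*n" and hi: "2*n \<le> p*q"
  shows "\<exists>P. validP p q P \<and> degP p q P \<and> finite P \<and> card P = n"
proof -
  have p3': "3 \<le> p" using pG by simp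
  have q3: "3 \<le> q" using q4 by simp
  have vM: "validP p q (arr q ` Mo)" using Mo_valid q4 by simp
  have sub: "fo ` {..<Sq q} \<subseteq> Mo" using fo_in[OF q4 pq p3] by blast
  have deg: "degP p q (arr q ` fo ` {..<Sq q})"
  proof (rule degCore[OF q3])
    show "\<forall>s<Sq q. snd (snd (fo s)) = cpat s" by (simp add: fo_def)
    show "inj_on fo {..<Sq q}" using fo_inj[OF p3'] .
    show "\<forall>r<p. \<exists>s1 s2 s3. s1 < Sq q \<and> s2 < Sq q \<and> s3 < Sq q \<and> s1 \<noteq> s2 \<and> s1 \<noteq> s3 \<and> s2 \<noteq> s3 \<and>
        (fst (fo s1) = r \<or> fst (snd (fo s1)) = r) \<and> (fst (fo s2) = r \<or> fst (snd (fo s2)) = r) \<and>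
        (fst (fo s3) = r \<or> fst (snd (fo s3)) = r)" using fo_rows[OF q4 pq] .
  qed
  have finMo: "finite Mo" unfolding Mo_def Band_def PlA_def Bs_def by simp
  have finM: "finite (arr q ` Mo)" using finMo by simp
  have subC: "arr q ` fo ` {..<Sq q} \<subseteq> arr q ` Mo" using sub by blast
  have cC: "card (arr q ` fo ` {..<Sq q}) \<le> n"
  proof -
    have "card (arr q ` fo ` {..<Sq q}) \<le> card (fo ` {..<Sq q})" by (rule card_image_le) simp
    also have "\<dots> \<le> card {..<Sq q}" by (rule card_image_le) simp
    also have "\<dots> = Sq q" by simp
    also have "\<dots> \<le> n" unfolding Sq_def using lo by simp
    finally show ?thesis .
  qed
  have cBand: "card Band = G * q"
  proof -
    have "card Band = card ({1..G} \<times> {..<q})" unfolding Band_def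
      by (rule card_image) (auto simp: inj_on_def)
    then show ?thesis by (simp add: card_cartesian_product)
  qed
  have cPlA: "card PlA = q"
  proof -
    have "inj_on (\<lambda>x. if even x \<and> x + 2 \<le> q then (0, p-1, x) else (0::nat, 1::nat, x)) {..<q}"
      by (rule inj_onI) (auto split: if_splits)
    then have "card PlA = card {..<q}" unfolding PlA_def by (rule card_image)
    then show ?thesis by simp
  qed
  have cBs: "card Bs = q div 2"
  proof -
    have "inj_on (\<lambda>u. (p-1, 1::nat, 2*u)) {..<q div 2}" by (rule inj_onI) auto
    then have "card Bs = card {..<q div 2}" unfolding Bs_def by (rule card_image)
    then show ?thesis by simp
  qed
  have d1: "Band \<inter> PlA = {}" unfolding Band_def PlA_def by auto
  have d2: "(Band \<union> PlA) \<inter> Bs = {}" unfolding Band_def PlA_def Bs_def using pG by auto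
  have finB: "finite Band" "finite PlA" "finite Bs" unfolding Band_def PlA_def Bs_def by simp_all
  have cMo: "card Mo = G*q + q + q div 2"
  proof -
    have "card (Band \<union> PlA) = G*q + q" using card_Un_disjoint[OF finB(1,2) d1] cBand cPlA by simp
    moreover have "card (Band \<union> PlA \<union> Bs) = card (Band \<union> PlA) + card Bs"
      using card_Un_disjoint[of "Band \<union> PlA" Bs] finB d2 by simp
    ultimately show ?thesis unfolding Mo_def using cBs by simp
  qed
  have cM: "card (arr q ` Mo) = card Mo" by (rule card_image) (rule inj_on_subset[OF arr_inj], simp)
  have "2*n \<le> 2*(G*q) + 3*q" using hi pG by (simp add: algebra_simps)
  then have "n \<le> G*q + q + q div 2" by presburger
  then have nM: "n \<le> card (arr q ` Mo)" using cM cMo by simp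
  obtain P where P: "arr q ` fo ` {..<Sq q} \<subseteq> P" "P \<subseteq> arr q ` Mo" "card P = n"
    using extend_set[OF finM subC cC nM] by blast
  have "validP p q P" using validP_mono[OF vM P(2)] .
  moreover have "degP p q P" using degP_mono[OF deg P(1)] .
  moreover have "finite P" using finM P(2) finite_subset by blast
  ultimately show ?thesis using P(3) by blast
qed

end

lemma grid_le:
  fixes p q n :: nat
  assumes p3: "3 \<le> p" and pq: "p \<le> q" and lo: "3*q \<le> 2*n" and hi: "2*n \<le> p*q"
  shows "\<exists>P. validP p q P \<and> degP p q P \<and> finite P \<and> card P = n"
proof (cases "even p")
  case True
  have "4 \<le> p" using True p3 by presburger
  then show ?thesis using even_case[OF True _ pq lo hi] by blast
next
  case False
  define G where "G = (p - 3) div 2"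
  have pG: "p = 2*G + 3" using False p3 G_def by presburger
  have p3e: "p = 3 \<Longrightarrow> even q"
  proof -
    assume "p = 3"
    then have "2*n = 3*q" using lo hi by simp
    then show "even q" by presburger
  qed
  have q4: "4 \<le> q"
  proof (cases "p = 3")
    case True
    then have "even q" using p3e by simp
    then show ?thesis using pq True by presburger
  next
    case False
    then show ?thesis using pG pq by simp
  qed
  show ?thesis using odd_case[OF pG q4 pq p3e lo hi] .
qed

lemma grid_exists:
  fixes p q n :: nat
  assumes p3: "3 \<le> p" and q3: "3 \<le> q" and lo: "3 * max p q \<le> 2*n" and hi: "2*n \<le> p*q"
  shows "\<exists>P. validP p q P \<and> degP p q P \<and> finite P \<and> card P = n"
proof (cases "p \<le> q")
  case True
  then show ?thesis using grid_le[OF p3 True _ hi] lo by simp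
next
  case False
  then have qp: "q \<le> p" by simp
  have hi': "2*n \<le> q*p" using hi by (simp add: mult.commute)
  obtain P where P: "validP q p P" "degP q p P" "finite P" "card P = n"
    using grid_le[OF q3 qp _ hi'] lo False by auto
  have "validP p q (trp ` P)" using validP_trp[OF P(1)] .
  moreover have "degP p q (trp ` P)" using degP_trp[OF P(2)] .
  moreover have "finite (trp ` P)" using P(3) by simp
  moreover have "card (trp ` P) = n" using P(4) card_image[OF inj_on_subset[OF trp_inj]] by simp
  ultimately show ?thesis by blast
qed

lemma upper:
  fixes p q n :: nat
  assumes p3: "3 \<le> p" and q3: "3 \<le> q" and lo: "3 * max p q \<le> 2*n" and hi: "2*n \<le> p*q"
  shows "\<exists>W. resolving (KKK_verts (p+1) (q+1) (n+1)) KKK_adj W \<and>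
             total_dominating (KKK_verts (p+1) (q+1) (n+1)) KKK_adj W \<and> card W = 2*n+1"
proof -
  obtain P where P: "validP p q P" "degP p q P" "finite P" "card P = n"
    using grid_exists[OF assms] by blast
  obtain \<alpha> \<beta> where C: "cfg p q n \<alpha> \<beta>" using P_to_cfg[OF P] by blast
  let ?V = "KKK_verts (p+1) (q+1) (n+1)"
  let ?W = "Wc p q n \<alpha> \<beta>"
  have n3: "3 \<le> n + 1" using lo p3 by simp
  have res: "resolving ?V KKK_adj ?W"
  proof -
    have m: "3 \<le> p + 1" "3 \<le> q + 1" "3 \<le> n + 1" using p3 q3 n3 by auto
    have "?W \<subseteq> ?V" using W_sub[OF C] .
    moreover have "\<forall>x\<in>?V - ?W. \<forall>y\<in>?V - ?W. x \<noteq> y \<longrightarrow> sep ?W x y"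
    proof (intro ballI impI)
      fix x y assume x: "x \<in> ?V - ?W" and y: "y \<in> ?V - ?W" and ne: "x \<noteq> y"
      show "sep ?W x y"
      proof (rule ccontr)
        assume "\<not> sep ?W x y"
        then have "\<forall>w\<in>?W. agree x w = agree y w" unfolding sep_def by blast
        then have "x = y" using sig_inj[OF C] x y by blast
        then show False using ne by simp
      qed
    qed
    ultimately show ?thesis using resolving_KKK[OF m] by blast
  qed
  have td: "total_dominating ?V KKK_adj ?W" using tdom[OF C] p3 by simp
  have cw: "card ?W = 2*n+1" using W_card[OF C] .
  show ?thesis using res td cw by blast
qed

lemma main_eq:
  fixes n1 n2 n3 :: nat
  assumes "3 \<le> n1" and "3 \<le> n2" and "3 * max n1 n2 \<le> 2 * n3" and "2 * n3 \<le> n1 * n2"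
  shows "metric_dim (KKK_verts (n1+1) (n2+1) (n3+1)) KKK_adj = 2 * (n3 + 1) - 1
       \<and> loc_dom_number (KKK_verts (n1+1) (n2+1) (n3+1)) KKK_adj = 2 * (n3 + 1) - 1
       \<and> loc_tdom_number (KKK_verts (n1+1) (n2+1) (n3+1)) KKK_adj = 2 * (n3 + 1) - 1"
proof -
  let ?V = "KKK_verts (n1+1) (n2+1) (n3+1)"
  obtain W0 where W0: "resolving ?V KKK_adj W0" "total_dominating ?V KKK_adj W0" "card W0 = 2*n3+1"
    using upper[OF assms] by blast
  have dom0: "dominating ?V KKK_adj W0" using W0(2) unfolding total_dominating_def dominating_def by blast
  have m: "3 \<le> n1 + 1" "3 \<le> n2 + 1" "3 \<le> n3 + 1" using assms by auto
  have lb: "2 * (n3 + 1) - 1 \<le> card W" if "resolving ?V KKK_adj W" for W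
    using lower_bound[OF m that] .
  have e: "2 * (n3 + 1) - 1 = 2*n3+1" by simp
  have i1: "Inf {card W | W. resolving ?V KKK_adj W} = 2 * (n3 + 1) - 1"
    apply (rule cInf_eq_minimum)
    subgoal using W0 e by (intro CollectI exI[of _ W0]) auto
    subgoal using lb by auto
    done
  have i2: "Inf {card W | W. resolving ?V KKK_adj W \<and> dominating ?V KKK_adj W} = 2 * (n3 + 1) - 1"
    apply (rule cInf_eq_minimum)
    subgoal using W0 dom0 e by (intro CollectI exI[of _ W0]) auto
    subgoal using lb by auto
    done
  have i3: "Inf {card W | W. resolving ?V KKK_adj W \<and> total_dominating ?V KKK_adj W} = 2 * (n3 + 1) - 1"
    apply (rule cInf_eq_minimum)
    subgoal using W0 e by (intro CollectI exI[of _ W0]) auto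
    subgoal using lb by auto
    done
  show ?thesis unfolding metric_dim_def loc_dom_number_def loc_tdom_number_def using i1 i2 i3 by simp
qed

theorem mainTheorem12:
  fixes n1 n2 n3 :: nat
  assumes "3 \<le> n1" and "3 \<le> n2" and "n1 \<le> n3" and "n2 \<le> n3"
    and "3 * max n1 n2 \<le> 2 * n3" and "2 * n3 \<le> n1 * n2"
  shows "metric_dim (KKK_verts (n1+1) (n2+1) (n3+1)) KKK_adj = 2 * (n3 + 1) - 1
       \<and> loc_dom_number (KKK_verts (n1+1) (n2+1) (n3+1)) KKK_adj = 2 * (n3 + 1) - 1
       \<and> loc_tdom_number (KKK_verts (n1+1) (n2+1) (n3+1)) KKK_adj = 2 * (n3 + 1) - 1"
  using main_eq[OF assms(1,2,5,6)] .

end
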